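(* Let $G$ be any $d$-regular graph and consider the random matching model. Then for any $K\ge\epsilon>0$, \[ \tau_{\operatorname{cont}}(K,\epsilon) \leq \frac{8}{d \cdot p_{\min}} \cdot \frac{1}{1-\lambda_2(\mathbf{P})}\cdot\log \left( \frac{K n^2}{\epsilon/2} \right). \]
   Context: $G=(V,E)$ is an undirected connected graph with $n$ nodes and maximum degree $\Delta$. A matching $\mathbf{M}^{(t)}\subseteq E$ is identified with the symmetric matrix with $\mathbf{M}^{(t)}_{u,u}=\mathbf{M}^{(t)}_{v,v}=\mathbf{M}^{(t)}_{u,v}=\mathbf{M}^{(t)}_{v,u}=1/2$ for $\{u,v\}\in\mathbf{M}^{(t)}$, $\mathbf{M}^{(t)}_{u,u}=1$ if $u$ is unmatched, other entries $0$. The continuous process is $\xi^{(t)}=\xi^{(t-1)}\mathbf{M}^{(t)}$ (row vectors). Random matching model: in each round a random matching is generated, independently across rounds, and $p_{\min}:=\min_t\min_{\{u,v\}\in E}\Pr[\{u,v\}\in\mathbf{M}^{(t)}]$, with $p_{\min}=\Omega(1/\Delta)$. The discrepancy of $\xi$ is $\max_{u,v}|\xi_u-\xi_v|$. For $t_1<t_2$, the interval $[t_1,t_2]$ (with its matchings $\mathbf{M}^{(t_1+1)},\dots,\mathbf{M}^{(t_2)}$) is $(K,\epsilon)$-smoothing if every $\xi^{(t_1)}\in\mathbb{R}^n$ with discrepancy at most $K$ yields $\xi^{(t_2)}$ with discrepancy at most $\epsilon$. In the random matching model, $\tau_{\operatorname{cont}}(K,\epsilon)$ is the minimum $t\in\mathbb{N}$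 such that $[0,t]$ is $(K,\epsilon)$-smoothing with probability at least $1-n^{-1}$ (over the random matchings). $\mathbf{P}$ is the matrix with $\mathbf{P}_{u,v}=\frac{1}{2\Delta}$ for $\{u,v\}\in E$, $\mathbf{P}_{u,u}=1-\frac{\deg(u)}{2\Delta}$, $0$ otherwise, and $\lambda_2(\mathbf{P})$ is its second largest eigenvalue. *)

theory Defs
  imports "HOL-Probability.Probability" "Jordan_Normal_Form.Char_Poly"
begin

definition edge_set :: "nat \<Rightarrow> (nat \<Rightarrow> nat \<Rightarrow> bool) \<Rightarrow> nat set set" where
  "edge_set n E = {{u, v} | u v. u < n \<and> v < n \<and> E u v}"

definition graph_deg :: "nat \<Rightarrow> (nat \<Rightarrow> nat \<Rightarrow> bool) \<Rightarrow> nat \<Rightarrow> nat" where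
  "graph_deg n E u = card {v. v < n \<and> E u v}"

definition max_deg :: "nat \<Rightarrow> (nat \<Rightarrow> nat \<Rightarrow> bool) \<Rightarrow> nat" where
  "max_deg n E = Max (graph_deg n E ` {..<n})"

definition simple_graph :: "nat \<Rightarrow> (nat \<Rightarrow> nat \<Rightarrow> bool) \<Rightarrow> bool" where
  "simple_graph n E \<longleftrightarrow> (\<forall>u v. E u v \<longrightarrow> u < n \<and> v < n \<and> u \<noteq> v \<and> E v u)"

definition connected_graph :: "nat \<Rightarrow> (nat \<Rightarrow> nat \<Rightarrow> bool) \<Rightarrow> bool" where
  "connected_graph n E \<longleftrightarrow> 0 < n \<and> (\<forall>u v. u < n \<longrightarrow> v < n \<longrightarrow> E\<^sup>*\<^sup>* u v)"

definition regular_graph :: "nat \<Rightarrow> (nat \<Rightarrow> nat \<Rightarrow> bool) \<Rightarrow> nat \<Rightarrow> bool" where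
  "regular_graph n E d \<longleftrightarrow> (\<forall>u<n. graph_deg n E u = d)"

definition is_matching :: "nat \<Rightarrow> (nat \<Rightarrow> nat \<Rightarrow> bool) \<Rightarrow> nat set set \<Rightarrow> bool" where
  "is_matching n E M \<longleftrightarrow> M \<subseteq> edge_set n E \<and>
     (\<forall>e\<in>M. \<forall>e'\<in>M. e \<noteq> e' \<longrightarrow> e \<inter> e' = {})"

definition matching_matrix :: "nat set set \<Rightarrow> nat \<Rightarrow> nat \<Rightarrow> real" where
  "matching_matrix M u v =
     (if u = v then (if (\<exists>w. {u, w} \<in> M) then 1/2 else 1)
      else if {u, v} \<in> M then 1/2 else 0)"

definition cont_step :: "nat \<Rightarrow> nat set set \<Rightarrow> (nat \<Rightarrow> real) \<Rightarrow> (nat \<Rightarrow> real)" where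
  "cont_step n M \<xi> = (\<lambda>v. \<Sum>u<n. \<xi> u * matching_matrix M u v)"

text \<open>cont_proc n ms s xi k: start with xi at time s and apply the matchings
  ms (s+1), ..., ms (s+k).\<close>
fun cont_proc :: "nat \<Rightarrow> (nat \<Rightarrow> nat set set) \<Rightarrow> nat \<Rightarrow> (nat \<Rightarrow> real) \<Rightarrow> nat \<Rightarrow> (nat \<Rightarrow> real)" where
  "cont_proc n ms s \<xi> 0 = \<xi>"
| "cont_proc n ms s \<xi> (Suc k) = cont_step n (ms (s + Suc k)) (cont_proc n ms s \<xi> k)"

definition discrepancy :: "nat \<Rightarrow> (nat \<Rightarrow> real) \<Rightarrow> real" where
  "discrepancy n \<xi> = Max {\<bar>\<xi> u - \<xi> v\<bar> | u v. u < n \<and> v < n}"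

definition smoothing :: "nat \<Rightarrow> (nat \<Rightarrow> nat set set) \<Rightarrow> nat \<Rightarrow> nat \<Rightarrow> real \<Rightarrow> real \<Rightarrow> bool" where
  "smoothing n ms t1 t2 K \<epsilon> \<longleftrightarrow>
     (\<forall>\<xi>. discrepancy n \<xi> \<le> K \<longrightarrow> discrepancy n (cont_proc n ms t1 \<xi> (t2 - t1)) \<le> \<epsilon>)"

text \<open>Random matching model: mu t is the distribution of the matching in round t
  (t \<ge> 1); rounds are independent, so the matchings of rounds 1..t are drawn
  from the product distribution.\<close>
definition p_min :: "nat \<Rightarrow> (nat \<Rightarrow> nat \<Rightarrow> bool) \<Rightarrow> (nat \<Rightarrow> nat set set pmf) \<Rightarrow> real" where
  "p_min n E \<mu> = (INF t\<in>{1..}. INF e\<in>edge_set n E. measure_pmf.prob (\<mu> t) {M. e \<in> M})"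

definition smoothing_prob :: "nat \<Rightarrow> (nat \<Rightarrow> nat set set pmf) \<Rightarrow> nat \<Rightarrow> real \<Rightarrow> real \<Rightarrow> real" where
  "smoothing_prob n \<mu> t K \<epsilon> =
     measure_pmf.prob (Pi_pmf {1..t} {} \<mu>) {ms. smoothing n ms 0 t K \<epsilon>}"

definition tau_cont :: "nat \<Rightarrow> (nat \<Rightarrow> nat set set pmf) \<Rightarrow> real \<Rightarrow> real \<Rightarrow> nat" where
  "tau_cont n \<mu> K \<epsilon> = (LEAST t. smoothing_prob n \<mu> t K \<epsilon> \<ge> 1 - 1 / real n)"

definition P_mat :: "nat \<Rightarrow> (nat \<Rightarrow> nat \<Rightarrow> bool) \<Rightarrow> real mat" where
  "P_mat n E = mat n n (\<lambda>(u, v).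
     if u = v then 1 - real (graph_deg n E u) / (2 * real (max_deg n E))
     else if E u v then 1 / (2 * real (max_deg n E)) else 0)"

text \<open>Eigenvalues (with multiplicity) of a real matrix whose characteristic
  polynomial splits over the reals, in non-increasing order; lambda_2 is the
  second entry.\<close>
definition eigenvalues_desc :: "real mat \<Rightarrow> real list" where
  "eigenvalues_desc A = (THE xs. sorted_wrt (\<ge>) xs \<and>
       char_poly A = (\<Prod>x\<leftarrow>xs. [:- x, 1:]))"

definition lambda2 :: "real mat \<Rightarrow> real" where
  "lambda2 A = eigenvalues_desc A ! 1"

end

theory Submission
  imports Defs "Jordan_Normal_Form.Schur_Decomposition"
begin

unbundle no inner_syntax


lemma sym_real_eigenvalue:
  fixes A :: "real mat"
  assumes A: "A \<in> carrier_mat n n" and sym: "A\<^sup>T = A" and n: "n > 0"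
  shows "\<exists>e. eigenvalue A e"
proof -
  define Ac where "Ac = map_mat complex_of_real A"
  have Ac: "Ac \<in> carrier_mat n n" using A unfolding Ac_def by auto
  obtain as where as: "char_poly Ac = (\<Prod>a\<leftarrow>as. [:- a, 1:])" "length as = n"
    using char_poly_factorized[OF Ac] by blast
  then obtain a where a: "a \<in> set as" using n by (cases as) auto
  have "poly (char_poly Ac) a = 0" unfolding as(1) using a
    by (induct as) (auto simp: poly_prod_list)
  hence "eigenvalue Ac a" using eigenvalue_root_char_poly[OF Ac] by simp
  then obtain v where ev: "eigenvector Ac v a" unfolding eigenvalue_def by auto
  hence v: "v \<in> carrier_vec n" "v \<noteq> 0\<^sub>v n" "Ac *\<^sub>v v = a \<cdot>\<^sub>v v"
    unfolding eigenvector_def using Ac by auto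
  have Aij: "A $$ (i,j) = A $$ (j,i)" if "i < n" "j < n" for i j
    using sym that A by (metis carrier_matD(1) carrier_matD(2) index_transpose_mat(1))
  define S where "S = (\<Sum>i<n. cnj (v $ i) * (\<Sum>j<n. complex_of_real (A $$ (i,j)) * v $ j))"
  define T where "T = (\<Sum>i<n. cnj (v $ i) * v $ i)"
  have eqi: "a * v $ i = (\<Sum>j<n. complex_of_real (A $$ (i,j)) * v $ j)" if "i < n" for i
  proof -
    have "(Ac *\<^sub>v v) $ i = (\<Sum>j<n. complex_of_real (A $$ (i,j)) * v $ j)"
      using that Ac v(1) A unfolding Ac_def by (auto simp: scalar_prod_def atLeast0LessThan)
    moreover have "(Ac *\<^sub>v v) $ i = a * v $ i" using v(3) v(1) that by simp
    ultimately show ?thesis by simp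
  qed
  have "S = (\<Sum>i<n. cnj (v $ i) * (a * v $ i))" unfolding S_def using eqi
    by (intro sum.cong) auto
  hence ST: "S = a * T" unfolding T_def by (simp add: sum_distrib_left ac_simps)
  have "cnj S = (\<Sum>i<n. v $ i * (\<Sum>j<n. complex_of_real (A $$ (i,j)) * cnj (v $ j)))"
    unfolding S_def by (simp add: cnj_sum)
  also have "\<dots> = (\<Sum>i<n. \<Sum>j<n. complex_of_real (A $$ (i,j)) * cnj (v $ j) * v $ i)"
    by (simp add: sum_distrib_left ac_simps)
  also have "\<dots> = (\<Sum>j<n. \<Sum>i<n. complex_of_real (A $$ (i,j)) * cnj (v $ j) * v $ i)"
    by (rule sum.swap)
  also have "\<dots> = (\<Sum>j<n. cnj (v $ j) * (\<Sum>i<n. complex_of_real (A $$ (j,i)) * v $ i))"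
    by (simp add: sum_distrib_left ac_simps Aij)
  also have "\<dots> = S" unfolding S_def ..
  finally have cS: "cnj S = S" .
  have Tr: "T = complex_of_real (\<Sum>i<n. (cmod (v $ i))\<^sup>2)"
    unfolding T_def of_real_sum
    by (intro sum.cong refl, subst mult.commute) (simp only: complex_norm_square[symmetric] of_real_power)
  obtain i where i: "i < n" "v $ i \<noteq> 0" using v by (metis eq_vecI carrier_vecD index_zero_vec)
  have R: "(\<Sum>i<n. (cmod (v $ i))\<^sup>2) > 0"
  proof -
    have "(\<Sum>i<n. (cmod (v $ i))\<^sup>2) \<ge> (cmod (v $ i))\<^sup>2"
      using i by (intro member_le_sum) auto
    moreover have "(cmod (v $ i))\<^sup>2 > 0" using i by simp
    ultimately show ?thesis by linarith
  qed
  have T0: "T \<noteq> 0" by (metis Tr R of_real_eq_0_iff less_irrefl)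
  have ImT: "Im T = 0" unfolding Tr by (rule Im_complex_of_real)
  have "Im S = 0" using arg_cong[OF cS, of Im] by simp
  moreover have "a = S / T" using ST T0 by simp
  ultimately have "Im a = 0" using ImT by (simp add: Im_divide)
  hence aR: "a = complex_of_real (Re a)" by (simp add: complex_eq_iff)
  have "poly (char_poly Ac) a = 0" by fact
  hence "poly (map_poly complex_of_real (char_poly A)) (complex_of_real (Re a)) = 0"
    using of_real_hom.char_poly_hom[OF A] aR unfolding Ac_def by metis
  hence "poly (char_poly A) (Re a) = 0" by simp
  thus ?thesis using eigenvalue_root_char_poly[OF A] by blast
qed




lemma real_conj_vec[simp]: "conjugate (v :: real vec) = v"
  by (rule eq_vecI) auto

lemma real_cscalar[simp]: "(v :: real vec) \<bullet>c w = v \<bullet> w"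
  by simp

lemma real_self_scalar_ge0: "(v :: real vec) \<bullet> v \<ge> 0"
  unfolding scalar_prod_def by (intro sum_nonneg) auto

definition onb :: "nat \<Rightarrow> real vec list \<Rightarrow> bool" where
  "onb n ws \<longleftrightarrow> length ws = n \<and> set ws \<subseteq> carrier_vec n \<and>
     (\<forall>i<n. \<forall>j<n. ws ! i \<bullet> ws ! j = (if i = j then 1 else 0))"

lemma onb_exists:
  assumes v: "v \<in> carrier_vec n" and v1: "v \<bullet> v = 1"
  shows "\<exists>ws. onb n ws \<and> ws ! 0 = v"
proof -
  have v0: "v \<noteq> 0\<^sub>v n" using v1 by auto
  have n0: "n \<noteq> 0" using v v1 by (cases n) (auto simp: scalar_prod_def)
  interpret cof_vec_space n "TYPE(real)" .
  define b where "b = basis_completion v"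
  have b: "set b \<subseteq> carrier_vec n" "distinct b" "\<not> lin_dep (set b)" "length b = n" "hd b = v"
    using basis_completion[OF v v0] unfolding b_def by auto
  define us where "us = gram_schmidt n b"
  note gs = gram_schmidt_result[OF b(1) b(2) b(3) us_def]
  obtain bs where bv: "b = v # bs" unfolding b_def basis_completion_def by (simp add: Let_def)
  have hd: "hd us = v" unfolding us_def bv using gram_schmidt_hd[OF v] .
  have lus: "length us = n" using gs b by simp
  have usc: "us ! i \<in> carrier_vec n" if "i < n" for i using gs(3) lus that by auto
  have orth: "us ! i \<bullet> us ! j = 0 \<longleftrightarrow> i \<noteq> j" if "i < n" "j < n" for i j
    using corthogonalD[OF gs(2), of i j] lus that by simp
  have pos: "us ! i \<bullet> us ! i > 0" if "i < n" for i
    using orth[OF that that] real_self_scalar_ge0[of "us ! i"] by linarith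
  define nz where "nz w = (1 / sqrt (w \<bullet> w)) \<cdot>\<^sub>v w" for w :: "real vec"
  define ws where "ws = map nz us"
  have us0: "us ! 0 = v" using hd lus n0 by (cases us) auto
  have "ws ! 0 = v" unfolding ws_def using lus n0 us0 by (simp add: nz_def v1)
  moreover have "onb n ws"
    unfolding onb_def
  proof (intro conjI allI impI)
    show "length ws = n" unfolding ws_def using lus by simp
    show "set ws \<subseteq> carrier_vec n" unfolding ws_def nz_def using gs(3) by auto
    fix i j assume i: "i < n" and j: "j < n"
    have "ws ! i \<bullet> ws ! j = (1 / sqrt (us ! i \<bullet> us ! i)) * (1 / sqrt (us ! j \<bullet> us ! j)) * (us ! i \<bullet> us ! j)"
      unfolding ws_def nz_def using i j lus usc[OF i] usc[OF j]
      by (simp add: smult_scalar_prod_distrib scalar_prod_smult_distrib)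
    also have "\<dots> = (if i = j then 1 else 0)"
    proof (cases "i = j")
      case True
      have p: "us ! i \<bullet> us ! i > 0" using pos[OF i] .
      have "(1 / sqrt (us ! i \<bullet> us ! i)) * (1 / sqrt (us ! i \<bullet> us ! i)) * (us ! i \<bullet> us ! i) = 1"
        using p by (simp add: field_simps)
      thus ?thesis using True by simp
    next
      case False thus ?thesis using orth[OF i j] by simp
    qed
    finally show "ws ! i \<bullet> ws ! j = (if i = j then 1 else 0)" .
  qed
  ultimately show ?thesis by blast
qed

lemma symform:
  fixes A :: "real mat"
  assumes A: "A \<in> carrier_mat n n" and sym: "A\<^sup>T = A" and x: "x \<in> carrier_vec n" and y: "y \<in> carrier_vec n"
  shows "x \<bullet> (A *\<^sub>v y) = y \<bullet> (A *\<^sub>v x)"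
proof -
  have "(A\<^sup>T *\<^sub>v x) \<bullet> y = x \<bullet> (A *\<^sub>v y)" by (rule transpose_vec_mult_scalar[OF A y x])
  thus ?thesis using sym comm_scalar_prod[of "A *\<^sub>v x" n y] A x y by simp
qed

definition eig_sys :: "real mat \<Rightarrow> nat \<Rightarrow> real vec list \<Rightarrow> real list \<Rightarrow> bool" where
  "eig_sys A n vs ls \<longleftrightarrow> onb n vs \<and> length ls = n \<and> (\<forall>i<n. A *\<^sub>v (vs ! i) = ls ! i \<cdot>\<^sub>v vs ! i)"




definition lift :: "nat \<Rightarrow> real vec \<Rightarrow> real vec" where
  "lift n y = vec (Suc n) (\<lambda>i. if i = 0 then 0 else y $ (i - 1))"

lemma lift_carrier[simp]: "lift n y \<in> carrier_vec (Suc n)"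
  unfolding lift_def by simp

lemma lift_scalar:
  assumes "y \<in> carrier_vec n" "y' \<in> carrier_vec n"
  shows "lift n y \<bullet> lift n y' = y \<bullet> y'"
proof -
  have "lift n y \<bullet> lift n y' = (\<Sum>i = 0..<Suc n. lift n y $ i * lift n y' $ i)"
    by (simp add: scalar_prod_def lift_def)
  also have "\<dots> = lift n y $ 0 * lift n y' $ 0 + (\<Sum>i = 0..<n. lift n y $ Suc i * lift n y' $ Suc i)"
    by (simp only: sum.atLeast0_lessThan_Suc_shift o_def)
  also have "\<dots> = y \<bullet> y'" using assms by (simp add: lift_def scalar_prod_def)
  finally show ?thesis .
qed

lemma lift_unit: "unit_vec (Suc n) 0 \<bullet> lift n y = 0"
proof -
  have "unit_vec (Suc n) 0 \<bullet> lift n y = (\<Sum>i = 0..<Suc n. unit_vec (Suc n) 0 $ i * lift n y $ i)"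
    by (simp add: scalar_prod_def lift_def)
  also have "\<dots> = unit_vec (Suc n) 0 $ 0 * lift n y $ 0 + (\<Sum>i = 0..<n. unit_vec (Suc n) 0 $ Suc i * lift n y $ Suc i)"
    by (simp only: sum.atLeast0_lessThan_Suc_shift o_def)
  also have "\<dots> = 0" by (simp add: lift_def)
  finally show ?thesis .
qed

lemma lift_smult: "y \<in> carrier_vec n \<Longrightarrow> lift n (c \<cdot>\<^sub>v y) = c \<cdot>\<^sub>v lift n y"
  unfolding lift_def by (rule eq_vecI) auto

theorem spectral:
  fixes A :: "real mat"
  assumes "A \<in> carrier_mat n n" "A\<^sup>T = A"
  shows "\<exists>vs ls. eig_sys A n vs ls"
  using assms
proof (induct n arbitrary: A)
  case 0
  show ?case by (rule exI[of _ "[]"], rule exI[of _ "[]"]) (simp add: eig_sys_def onb_def)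
next
  case (Suc n A)
  let ?N = "Suc n"
  have A: "A \<in> carrier_mat ?N ?N" and sym: "A\<^sup>T = A" by fact+
  obtain e where "eigenvalue A e" using sym_real_eigenvalue[OF A sym] by auto
  then obtain v0 where "eigenvector A v0 e" unfolding eigenvalue_def by auto
  hence v0: "v0 \<in> carrier_vec ?N" "v0 \<noteq> 0\<^sub>v ?N" "A *\<^sub>v v0 = e \<cdot>\<^sub>v v0"
    unfolding eigenvector_def using A by auto
  have "v0 \<bullet> v0 \<noteq> 0"
  proof
    assume "v0 \<bullet> v0 = 0"
    hence "v0 \<bullet>c v0 = 0" by simp
    hence "v0 = 0\<^sub>v ?N" using conjugate_square_eq_0_vec[OF v0(1)] by simp
    thus False using v0(2) by simp
  qed
  hence pos: "v0 \<bullet> v0 > 0" using real_self_scalar_ge0[of v0] by linarith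
  define v where "v = (1 / sqrt (v0 \<bullet> v0)) \<cdot>\<^sub>v v0"
  have vc: "v \<in> carrier_vec ?N" unfolding v_def using v0 by simp
  have v1: "v \<bullet> v = 1" unfolding v_def using v0(1) pos
    by (simp add: smult_scalar_prod_distrib scalar_prod_smult_distrib field_simps)
  have Av: "A *\<^sub>v v = e \<cdot>\<^sub>v v" unfolding v_def using v0 A
    by (simp add: mult_mat_vec smult_smult_assoc mult.commute)
  obtain ws where ws: "onb ?N ws" "ws ! 0 = v" using onb_exists[OF vc v1] by blast
  have lws: "length ws = ?N" and wsc: "\<And>i. i < ?N \<Longrightarrow> ws ! i \<in> carrier_vec ?N"
    and wso: "\<And>i j. i < ?N \<Longrightarrow> j < ?N \<Longrightarrow> ws ! i \<bullet> ws ! j = (if i = j then 1 else 0)"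
    using ws(1) unfolding onb_def by auto
  define W where "W = mat_of_cols ?N ws"
  have W: "W \<in> carrier_mat ?N ?N" unfolding W_def using mat_of_cols_carrier(1)[of ?N ws] lws by simp
  have colW: "col W i = ws ! i" if "i < ?N" for i unfolding W_def using that lws wsc[OF that] by simp
  have WtW: "W\<^sup>T * W = 1\<^sub>m ?N"
    by (rule eq_matI) (use W colW wso in auto)
  have WWt: "W * W\<^sup>T = 1\<^sub>m ?N"
    using mat_mult_left_right_inverse[OF _ W WtW] W by simp
  define B where "B = W\<^sup>T * A * W"
  have B: "B \<in> carrier_mat ?N ?N" unfolding B_def using W A by simp
  have Bsym: "B\<^sup>T = B" unfolding B_def using W A sym
    by (simp add: transpose_mult[of _ ?N ?N _ ?N] assoc_mult_mat[of _ ?N ?N _ ?N _ ?N])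
  have Bij: "B $$ (i,j) = ws ! i \<bullet> (A *\<^sub>v ws ! j)" if "i < ?N" "j < ?N" for i j
  proof -
    have "B = W\<^sup>T * (A * W)" unfolding B_def using W A by simp
    hence "B $$ (i,j) = row W\<^sup>T i \<bullet> col (A * W) j" using that W A by simp
    also have "\<dots> = ws ! i \<bullet> (A *\<^sub>v ws ! j)" using that W A colW by (simp add: mult_mat_vec_def)
    finally show ?thesis .
  qed
  have Bi0: "B $$ (i,0) = (if i = 0 then e else 0)" if "i < ?N" for i
  proof -
    have "B $$ (i,0) = ws ! i \<bullet> (e \<cdot>\<^sub>v ws ! 0)" using Bij[OF that] Av ws(2) by simp
    also have "\<dots> = e * (ws ! i \<bullet> ws ! 0)" using wsc[OF that] wsc[of 0]
      by (simp add: scalar_prod_smult_distrib)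
    finally show ?thesis using wso[OF that, of 0] by simp
  qed
  have B0j: "B $$ (0,j) = (if j = 0 then e else 0)" if "j < ?N" for j
  proof -
    have "B $$ (0,j) = B\<^sup>T $$ (j,0)" using B that by simp
    thus ?thesis using Bsym Bi0[OF that] by simp
  qed
  define C where "C = mat n n (\<lambda>(i,j). B $$ (Suc i, Suc j))"
  have C: "C \<in> carrier_mat n n" unfolding C_def by simp
  have Csym: "C\<^sup>T = C"
  proof (rule eq_matI)
    fix i j assume "i < dim_row C" "j < dim_col C"
    hence "i < n" "j < n" using C by auto
    moreover have "B $$ (Suc j, Suc i) = B\<^sup>T $$ (Suc i, Suc j)" using B \<open>i < n\<close> \<open>j < n\<close> by simp
    ultimately show "C\<^sup>T $$ (i, j) = C $$ (i, j)" unfolding C_def using Bsym by simp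
  qed (use C in auto)
  obtain ys ks where yk: "eig_sys C n ys ks" using Suc.hyps[OF C Csym] by blast
  have lys: "length ys = n" and ysc: "\<And>i. i < n \<Longrightarrow> ys ! i \<in> carrier_vec n"
    and yso: "\<And>i j. i < n \<Longrightarrow> j < n \<Longrightarrow> ys ! i \<bullet> ys ! j = (if i = j then 1 else 0)"
    and lks: "length ks = n" and yev: "\<And>i. i < n \<Longrightarrow> C *\<^sub>v (ys ! i) = ks ! i \<cdot>\<^sub>v ys ! i"
    using yk unfolding eig_sys_def onb_def by auto
  have Blift: "B *\<^sub>v lift n y = lift n (C *\<^sub>v y)" if y: "y \<in> carrier_vec n" for y
  proof (rule eq_vecI)
    show "dim_vec (B *\<^sub>v lift n y) = dim_vec (lift n (C *\<^sub>v y))" using B by (simp add: lift_def)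
    fix i assume "i < dim_vec (lift n (C *\<^sub>v y))"
    hence i: "i < ?N" by (simp add: lift_def)
    have "(B *\<^sub>v lift n y) $ i = (\<Sum>j = 0..<?N. B $$ (i, j) * lift n y $ j)"
      using i B by (simp add: scalar_prod_def lift_def del: sum.op_ivl_Suc)
    also have "\<dots> = B $$ (i, 0) * lift n y $ 0 + (\<Sum>j = 0..<n. B $$ (i, Suc j) * lift n y $ Suc j)"
      by (simp only: sum.atLeast0_lessThan_Suc_shift o_def)
    also have "\<dots> = (\<Sum>j = 0..<n. B $$ (i, Suc j) * y $ j)"
      by (simp add: lift_def)
    also have "\<dots> = lift n (C *\<^sub>v y) $ i"
    proof (cases i)
      case 0
      thus ?thesis using B0j by (simp add: lift_def)
    next
      case (Suc i')
      hence "i' < n" using i by simp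
      thus ?thesis using Suc C y by (simp add: lift_def scalar_prod_def C_def)
    qed
    finally show "(B *\<^sub>v lift n y) $ i = lift n (C *\<^sub>v y) $ i" .
  qed
  have Be0: "B *\<^sub>v unit_vec ?N 0 = e \<cdot>\<^sub>v unit_vec ?N 0"
  proof (rule eq_vecI)
    fix i assume "i < dim_vec (e \<cdot>\<^sub>v unit_vec ?N 0)"
    hence i: "i < ?N" by simp
    have "(B *\<^sub>v unit_vec ?N 0) $ i = row B i \<bullet> unit_vec ?N 0" using i B by simp
    also have "\<dots> = B $$ (i, 0)" using i B by simp
    finally show "(B *\<^sub>v unit_vec ?N 0) $ i = (e \<cdot>\<^sub>v unit_vec ?N 0) $ i"
      using Bi0[OF i] i by auto
  qed (use B in simp)
  have AW: "A *\<^sub>v (W *\<^sub>v x) = W *\<^sub>v (B *\<^sub>v x)" if x: "x \<in> carrier_vec ?N" for x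
  proof -
    have "W * B = (W * W\<^sup>T) * A * W" unfolding B_def using W A
      by (simp add: assoc_mult_mat[of _ ?N ?N _ ?N _ ?N])
    also have "\<dots> = A * W" using WWt A W by simp
    finally have "W * B = A * W" .
    hence "(W * B) *\<^sub>v x = (A * W) *\<^sub>v x" by simp
    thus ?thesis using W B A x by simp
  qed
  have WW: "(W *\<^sub>v x) \<bullet> (W *\<^sub>v y) = x \<bullet> y" if x: "x \<in> carrier_vec ?N" and y: "y \<in> carrier_vec ?N" for x y
  proof -
    have "(W\<^sup>T *\<^sub>v (W *\<^sub>v x)) \<bullet> y = (W *\<^sub>v x) \<bullet> (W *\<^sub>v y)"
      by (rule transpose_vec_mult_scalar[OF W y]) (use W x in simp)
    moreover have "W\<^sup>T *\<^sub>v (W *\<^sub>v x) = x"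
      using WtW W x by (simp flip: assoc_mult_mat_vec[of _ ?N ?N _ ?N])
    ultimately show ?thesis by simp
  qed
  have We0: "W *\<^sub>v unit_vec ?N 0 = v"
  proof (rule eq_vecI)
    fix i assume "i < dim_vec v"
    hence i: "i < ?N" using vc by simp
    have "(W *\<^sub>v unit_vec ?N 0) $ i = row W i \<bullet> unit_vec ?N 0" using i W by simp
    also have "\<dots> = W $$ (i, 0)" using i W by simp
    also have "\<dots> = col W 0 $ i" using i W by simp
    finally show "(W *\<^sub>v unit_vec ?N 0) $ i = v $ i" using colW[of 0] ws(2) by simp
  qed (use W vc in simp)
  define vs where "vs = (W *\<^sub>v unit_vec ?N 0) # map (\<lambda>y. W *\<^sub>v lift n y) ys"
  define ls where "ls = e # ks"
  have vs_nth: "vs ! i = W *\<^sub>v (if i = 0 then unit_vec ?N 0 else lift n (ys ! (i - 1)))" if "i < ?N" for i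
    using that lys unfolding vs_def by (cases i) auto
  have uc: "(if i = 0 then unit_vec ?N 0 else lift n (ys ! (i - 1))) \<in> carrier_vec ?N" for i
    by simp
  have "eig_sys A ?N vs ls"
    unfolding eig_sys_def onb_def
  proof (intro conjI allI impI)
    show "length vs = ?N" unfolding vs_def using lys by simp
    show "length ls = ?N" unfolding ls_def using lks by simp
    show "set vs \<subseteq> carrier_vec ?N" unfolding vs_def using W by auto
    fix i j assume i: "i < ?N" and j: "j < ?N"
    show "vs ! i \<bullet> vs ! j = (if i = j then 1 else 0)"
      unfolding vs_nth[OF i] vs_nth[OF j] WW[OF uc uc]
    proof (cases i; cases j)
      fix i' j' assume "i = Suc i'" "j = Suc j'"
      thus "(if i = 0 then unit_vec ?N 0 else lift n (ys ! (i - 1))) \<bullet>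
            (if j = 0 then unit_vec ?N 0 else lift n (ys ! (j - 1))) = (if i = j then 1 else 0)"
        using i j lift_scalar[OF ysc ysc] yso by simp
    qed (auto simp: lift_unit comm_scalar_prod[of "lift n _" ?N] lift_def)
  next
    fix i assume i: "i < ?N"
    show "A *\<^sub>v vs ! i = ls ! i \<cdot>\<^sub>v vs ! i"
    proof (cases i)
      case 0
      thus ?thesis unfolding vs_nth[OF i] ls_def
        using AW[of "unit_vec ?N 0"] Be0 W by (simp add: mult_mat_vec)
    next
      case (Suc i')
      hence i': "i' < n" using i by simp
      have "A *\<^sub>v vs ! i = W *\<^sub>v (B *\<^sub>v lift n (ys ! i'))"
        unfolding vs_nth[OF i] using Suc AW by simp
      also have "\<dots> = W *\<^sub>v lift n (ks ! i' \<cdot>\<^sub>v ys ! i')"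
        using Blift[OF ysc[OF i']] yev[OF i'] by simp
      also have "\<dots> = ks ! i' \<cdot>\<^sub>v (W *\<^sub>v lift n (ys ! i'))"
        using W ysc[OF i'] by (simp add: lift_smult mult_mat_vec)
      finally show ?thesis unfolding vs_nth[OF i] ls_def using Suc by simp
    qed
  qed
  thus ?case by blast
qed




lemma prod_lin_mset:
  "(\<Prod>y\<leftarrow>ys. [:- y, 1:]) = (\<Prod>y\<leftarrow>zs. [:- y, 1:] :: real poly) \<Longrightarrow> mset ys = mset zs"
proof (induct ys arbitrary: zs)
  case Nil
  have "degree (\<Prod>y\<leftarrow>zs. [:- y, 1:] :: real poly) = length zs"
    using degree_linear_factors[of uminus zs] by simp
  thus ?case using Nil by simp
next
  case (Cons y ys zs)
  have "poly (\<Prod>y\<leftarrow>zs. [:- y, 1:]) y = 0" using Cons(2)[symmetric] by (simp add: poly_prod_list)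
  hence yz: "y \<in> set zs" by (induct zs) auto
  have "(\<Prod>y\<leftarrow>zs. [:- y, 1:]) = [:- y, 1:] * (\<Prod>y\<leftarrow>remove1 y zs. [:- y, 1:] :: real poly)"
    by (rule prod_list_map_remove1[OF yz])
  with Cons(2) have "[:- y, 1:] * (\<Prod>y\<leftarrow>ys. [:- y, 1:]) = [:- y, 1:] * (\<Prod>y\<leftarrow>remove1 y zs. [:- y, 1:] :: real poly)"
    by simp
  hence "(\<Prod>y\<leftarrow>ys. [:- y, 1:]) = (\<Prod>y\<leftarrow>remove1 y zs. [:- y, 1:] :: real poly)"
    by (simp del: mult_pCons_left)
  from Cons(1)[OF this] yz show ?case by simp
qed

lemma prod_lin_perm:
  "mset ys = mset zs \<Longrightarrow> (\<Prod>y\<leftarrow>ys. [:- y, 1:]) = (\<Prod>y\<leftarrow>zs. [:- y, 1:] :: real poly)"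
  by (metis mset_map prod_mset_prod_list)

lemma eigenvalues_desc_eq:
  assumes "char_poly A = (\<Prod>l\<leftarrow>ls. [:- l, 1:])"
  shows "eigenvalues_desc A = rev (sort ls)"
  unfolding eigenvalues_desc_def
proof (rule the_equality)
  show "sorted_wrt (\<ge>) (rev (sort ls)) \<and> char_poly A = (\<Prod>x\<leftarrow>rev (sort ls). [:- x, 1:])"
    using assms prod_lin_perm[of "rev (sort ls)" ls] by (simp add: sorted_wrt_rev)
next
  fix xs assume "sorted_wrt (\<ge>) xs \<and> char_poly A = (\<Prod>x\<leftarrow>xs. [:- x, 1:])"
  hence s: "sorted (rev xs)" and m: "mset xs = mset ls"
    using assms prod_lin_mset[of xs ls] by (auto simp: sorted_wrt_rev)
  have "sort ls = rev xs" by (rule properties_for_sort) (use s m in auto)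
  thus "xs = rev (sort ls)" by simp
qed

lemma eig_sys_W:
  assumes es: "eig_sys A n vs ls" and A: "A \<in> carrier_mat n n"
  defines "W \<equiv> mat_of_cols n vs"
  shows "W \<in> carrier_mat n n" "W\<^sup>T * W = 1\<^sub>m n" "W * W\<^sup>T = 1\<^sub>m n" "\<And>i. i < n \<Longrightarrow> col W i = vs ! i"
proof -
  have lvs: "length vs = n" and vsc: "\<And>i. i < n \<Longrightarrow> vs ! i \<in> carrier_vec n"
    and vso: "\<And>i j. i < n \<Longrightarrow> j < n \<Longrightarrow> vs ! i \<bullet> vs ! j = (if i = j then 1 else 0)"
    using es unfolding eig_sys_def onb_def by auto
  show W: "W \<in> carrier_mat n n" unfolding W_def using mat_of_cols_carrier(1)[of n vs] lvs by simp
  show colW: "\<And>i. i < n \<Longrightarrow> col W i = vs ! i" unfolding W_def using lvs vsc by simp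
  show WtW: "W\<^sup>T * W = 1\<^sub>m n"
    by (rule eq_matI) (use W colW vso in auto)
  show "W * W\<^sup>T = 1\<^sub>m n"
    using mat_mult_left_right_inverse[OF _ W WtW] W by simp
qed

lemma eig_sys_charpoly:
  assumes es: "eig_sys A n vs ls" and A: "A \<in> carrier_mat n n"
  shows "char_poly A = (\<Prod>l\<leftarrow>ls. [:- l, 1:])"
proof -
  define W where "W = mat_of_cols n vs"
  note Wp = eig_sys_W[OF es A, folded W_def]
  have lls: "length ls = n" and ev: "\<And>i. i < n \<Longrightarrow> A *\<^sub>v (vs ! i) = ls ! i \<cdot>\<^sub>v vs ! i"
    and vsc: "\<And>i. i < n \<Longrightarrow> vs ! i \<in> carrier_vec n"
    using es unfolding eig_sys_def onb_def by auto
  define D where "D = mat n n (\<lambda>(i,j). if i = j then ls ! i else 0)"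
  have D: "D \<in> carrier_mat n n" unfolding D_def by simp
  have AW: "A * W = W * D"
  proof (rule eq_matI)
    fix i j assume i: "i < dim_row (W * D)" and j: "j < dim_col (W * D)"
    hence i: "i < n" and j: "j < n" using Wp(1) D by auto
    have "(A * W) $$ (i,j) = (A *\<^sub>v col W j) $ i" using i j A Wp(1) by simp
    also have "\<dots> = ls ! j * vs ! j $ i" using Wp(4)[OF j] ev[OF j] i vsc[OF j] by simp
    also have "\<dots> = (W * D) $$ (i,j)"
    proof -
      have "(W * D) $$ (i,j) = row W i \<bullet> col D j" using i j Wp(1) D by simp
      also have "col D j = ls ! j \<cdot>\<^sub>v unit_vec n j"
        by (rule eq_vecI) (use j in \<open>auto simp: D_def\<close>)
      also have "row W i \<bullet> (ls ! j \<cdot>\<^sub>v unit_vec n j) = ls ! j * (row W i \<bullet> unit_vec n j)"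
        using Wp(1) i by (simp add: scalar_prod_smult_distrib)
      also have "row W i \<bullet> unit_vec n j = W $$ (i,j)" using Wp(1) i j by simp
      also have "W $$ (i,j) = vs ! j $ i" using Wp(4)[OF j] i j Wp(1) index_col[of i W j] by simp
      finally show ?thesis by simp
    qed
    finally show "(A * W) $$ (i,j) = (W * D) $$ (i,j)" .
  qed (use A Wp(1) D in auto)
  have "A = A * (W * W\<^sup>T)" using Wp(3) A by simp
  also have "\<dots> = (A * W) * W\<^sup>T" using A Wp(1) by simp
  also have "\<dots> = W * D * W\<^sup>T" unfolding AW ..
  finally have "similar_mat_wit A D W W\<^sup>T"
    unfolding similar_mat_wit_def using A D Wp by (auto simp: Let_def)
  hence "char_poly A = char_poly D" using char_poly_similar unfolding similar_mat_def by blast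
  also have "\<dots> = (\<Prod>a\<leftarrow>diag_mat D. [:- a, 1:])"
    by (rule char_poly_upper_triangular[OF D]) (auto simp: upper_triangular_def D_def)
  also have "diag_mat D = ls" unfolding diag_mat_def D_def using lls
    by (simp add: list_eq_iff_nth_eq)
  finally show ?thesis .
qed

lemma eig_sys_parseval:
  assumes es: "eig_sys A n vs ls" and A: "A \<in> carrier_mat n n" and x: "x \<in> carrier_vec n"
  shows "x \<bullet> x = (\<Sum>i<n. (vs ! i \<bullet> x)\<^sup>2)" "x \<bullet> (A *\<^sub>v x) = (\<Sum>i<n. ls ! i * (vs ! i \<bullet> x)\<^sup>2)"
proof -
  define W where "W = mat_of_cols n vs"
  note Wp = eig_sys_W[OF es A, folded W_def]
  have lls: "length ls = n" and ev: "\<And>i. i < n \<Longrightarrow> A *\<^sub>v (vs ! i) = ls ! i \<cdot>\<^sub>v vs ! i"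
    and vsc: "\<And>i. i < n \<Longrightarrow> vs ! i \<in> carrier_vec n"
    and vso: "\<And>i j. i < n \<Longrightarrow> j < n \<Longrightarrow> vs ! i \<bullet> vs ! j = (if i = j then 1 else 0)"
    using es unfolding eig_sys_def onb_def by auto
  define c where "c = W\<^sup>T *\<^sub>v x"
  have cc: "c \<in> carrier_vec n" unfolding c_def using Wp(1) x by simp
  have ci: "c $ i = vs ! i \<bullet> x" if "i < n" for i
    unfolding c_def using that Wp(1) Wp(4)[OF that] x by simp
  have xW: "x = W *\<^sub>v c" unfolding c_def using Wp(1,3) x
    by (simp flip: assoc_mult_mat_vec[of _ n n _ n])
  have WW: "(W *\<^sub>v y) \<bullet> (W *\<^sub>v z) = y \<bullet> z" if y: "y \<in> carrier_vec n" and z: "z \<in> carrier_vec n" for y z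
  proof -
    have "(W\<^sup>T *\<^sub>v (W *\<^sub>v y)) \<bullet> z = (W *\<^sub>v y) \<bullet> (W *\<^sub>v z)"
      by (rule transpose_vec_mult_scalar[OF Wp(1) z]) (use Wp(1) y in simp)
    moreover have "W\<^sup>T *\<^sub>v (W *\<^sub>v y) = y"
      using Wp(1,2) y by (simp flip: assoc_mult_mat_vec[of _ n n _ n])
    ultimately show ?thesis by simp
  qed
  define dc where "dc = vec n (\<lambda>i. ls ! i * c $ i)"
  have dcc: "dc \<in> carrier_vec n" unfolding dc_def by simp
  have AWc: "A *\<^sub>v (W *\<^sub>v c) = W *\<^sub>v dc"
  proof (rule eq_vecI)
    fix k assume "k < dim_vec (W *\<^sub>v dc)"
    hence k: "k < n" using Wp(1) by simp
    have "A *\<^sub>v (W *\<^sub>v c) = (A * W) *\<^sub>v c" using A Wp(1) cc by simp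
    hence "(A *\<^sub>v (W *\<^sub>v c)) $ k = row (A * W) k \<bullet> c" using k A Wp(1) by simp
    also have "\<dots> = (\<Sum>i = 0..<n. (A * W) $$ (k, i) * c $ i)"
      unfolding scalar_prod_def using cc k A Wp(1) by simp
    also have "\<dots> = (\<Sum>i = 0..<n. W $$ (k, i) * dc $ i)"
    proof (rule sum.cong[OF refl])
      fix i assume "i \<in> {0..<n}"
      hence i: "i < n" by simp
      have "(A * W) $$ (k, i) = (A *\<^sub>v col W i) $ k" using i k A Wp(1) by simp
      also have "\<dots> = ls ! i * vs ! i $ k" using Wp(4)[OF i] ev[OF i] k vsc[OF i] by simp
      also have "vs ! i $ k = W $$ (k,i)" using Wp(4)[OF i] i k Wp(1) index_col[of k W i] by simp
      finally show "(A * W) $$ (k, i) * c $ i = W $$ (k, i) * dc $ i"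
        unfolding dc_def using i by simp
    qed
    also have "\<dots> = (W *\<^sub>v dc) $ k" using dcc k Wp(1) by (auto simp: scalar_prod_def intro!: sum.cong)
    finally show "(A *\<^sub>v (W *\<^sub>v c)) $ k = (W *\<^sub>v dc) $ k" .
  qed (use A Wp(1) in simp)
  have "x \<bullet> x = c \<bullet> c" unfolding xW using WW[OF cc cc] .
  also have "\<dots> = (\<Sum>i\<in>{0..<n}. c $ i * c $ i)" using cc by (simp add: scalar_prod_def)
  also have "\<dots> = (\<Sum>i<n. (vs ! i \<bullet> x)\<^sup>2)" using ci
    by (auto simp: atLeast0LessThan power2_eq_square intro!: sum.cong)
  finally show "x \<bullet> x = (\<Sum>i<n. (vs ! i \<bullet> x)\<^sup>2)" .
  have "x \<bullet> (A *\<^sub>v x) = c \<bullet> dc" unfolding xW AWc using WW[OF cc dcc] .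
  also have "\<dots> = (\<Sum>i\<in>{0..<n}. c $ i * dc $ i)" using dcc by (simp add: scalar_prod_def)
  also have "\<dots> = (\<Sum>i<n. ls ! i * (vs ! i \<bullet> x)\<^sup>2)" using ci
    by (auto simp: atLeast0LessThan power2_eq_square dc_def intro!: sum.cong)
  finally show "x \<bullet> (A *\<^sub>v x) = (\<Sum>i<n. ls ! i * (vs ! i \<bullet> x)\<^sup>2)" .
qed




definition Qf :: "nat \<Rightarrow> (nat \<Rightarrow> nat \<Rightarrow> bool) \<Rightarrow> (nat \<Rightarrow> real) \<Rightarrow> real" where
  "Qf n E f = (\<Sum>u<n. \<Sum>v<n. if E u v then (f u - f v)\<^sup>2 else 0)"

definition sqf :: "nat \<Rightarrow> (nat \<Rightarrow> real) \<Rightarrow> real" where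
  "sqf n f = (\<Sum>u<n. (f u)\<^sup>2)"

lemma Qf_nonneg: "Qf n E f \<ge> 0"
  unfolding Qf_def by (intro sum_nonneg) auto

locale rgraph =
  fixes n :: nat and E :: "nat \<Rightarrow> nat \<Rightarrow> bool" and d :: nat
  assumes simple: "simple_graph n E" and conn: "connected_graph n E" and reg: "regular_graph n E d"
    and n2: "n \<ge> 2"
begin

lemma E_lt: "E u v \<Longrightarrow> u < n \<and> v < n" using simple unfolding simple_graph_def by auto
lemma E_sym: "E u v \<Longrightarrow> E v u" using simple unfolding simple_graph_def by auto
lemma E_irrefl: "\<not> E u u" using simple unfolding simple_graph_def by auto

lemma deg_sum: "u < n \<Longrightarrow> (\<Sum>v<n. if E u v then 1 else 0 :: real) = real d"
proof -
  assume u: "u < n"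
  have "(\<Sum>v<n. if E u v then 1 else 0 :: real) = real (card {v. v < n \<and> E u v})"
    by (simp add: sum.If_cases Int_def lessThan_def conj_commute)
  also have "card {v. v < n \<and> E u v} = d" using reg u unfolding regular_graph_def graph_deg_def by auto
  finally show ?thesis .
qed

lemma d_pos: "d > 0"
proof -
  have "E\<^sup>*\<^sup>* 0 1" using conn n2 unfolding connected_graph_def by auto
  then obtain w where "E 0 w" by (metis converse_rtranclpE zero_neq_one)
  hence "w \<in> {v. v < n \<and> E 0 v}" using E_lt by auto
  hence "card {v. v < n \<and> E 0 v} > 0" by (subst card_gt_0_iff) auto
  moreover have "graph_deg n E 0 = d" using reg n2 unfolding regular_graph_def by auto
  ultimately show ?thesis unfolding graph_deg_def by simp
qed

lemma max_deg_eq: "max_deg n E = d"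
proof -
  have "graph_deg n E ` {..<n} = (\<lambda>_. d) ` {..<n}"
    by (rule image_cong) (use reg in \<open>auto simp: regular_graph_def\<close>)
  also have "\<dots> = {d}" by (subst image_constant_conv) (use n2 in \<open>auto simp: lessThan_empty_iff\<close>)
  finally have "graph_deg n E ` {..<n} = {d}" .
  thus ?thesis unfolding max_deg_def by simp
qed

abbreviation PP where "PP \<equiv> P_mat n E"

lemma P_carrier: "PP \<in> carrier_mat n n" unfolding P_mat_def by simp

lemma P_entry: "u < n \<Longrightarrow> v < n \<Longrightarrow>
  PP $$ (u,v) = (if u = v then 1/2 else 0) + (if E u v then 1 / (2 * real d) else 0)"
  unfolding P_mat_def using max_deg_eq reg d_pos E_irrefl
  by (auto simp: regular_graph_def)

lemma P_sym: "PP\<^sup>T = PP"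
  by (rule eq_matI) (use P_carrier E_sym in \<open>auto simp: P_entry\<close>)

lemma quad:
  "vec n f \<bullet> (PP *\<^sub>v vec n f) = sqf n f - Qf n E f / (4 * real d)"
proof -
  define S where "S = (\<Sum>u<n. \<Sum>v<n. if E u v then f u * f v else 0)"
  have inner: "(\<Sum>v<n. PP $$ (u,v) * f v) = f u / 2 + (\<Sum>v<n. if E u v then f v else 0) / (2 * real d)"
    if u: "u < n" for u
  proof -
    have "(\<Sum>v<n. PP $$ (u,v) * f v) = (\<Sum>v<n. (if u = v then f u / 2 else 0) + (if E u v then f v / (2 * real d) else 0))"
      using u E_irrefl by (intro sum.cong) (auto simp: P_entry)
    also have "\<dots> = (\<Sum>v<n. if u = v then f u / 2 else 0) + (\<Sum>v<n. if E u v then f v / (2 * real d) else 0)"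
      by (rule sum.distrib)
    also have "(\<Sum>v<n. if u = v then f u / 2 else 0) = f u / 2" using u by simp
    also have "(\<Sum>v<n. if E u v then f v / (2 * real d) else 0) = (\<Sum>v<n. if E u v then f v else 0) / (2 * real d)"
      unfolding sum_divide_distrib by (intro sum.cong) auto
    finally show ?thesis .
  qed
  have "vec n f \<bullet> (PP *\<^sub>v vec n f) = (\<Sum>u<n. f u * (\<Sum>v<n. PP $$ (u,v) * f v))"
    using P_carrier by (auto simp: scalar_prod_def atLeast0LessThan intro!: sum.cong)
  also have "\<dots> = (\<Sum>u<n. (f u)\<^sup>2 / 2 + (\<Sum>v<n. if E u v then f u * f v else 0) / (2 * real d))"
    by (intro sum.cong refl) (simp add: inner sum_distrib_left power2_eq_square if_distrib ring_distribs
        cong: if_cong)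
  also have "\<dots> = sqf n f / 2 + S / (2 * real d)"
    unfolding sqf_def S_def by (simp add: sum.distrib sum_divide_distrib)
  finally have l: "vec n f \<bullet> (PP *\<^sub>v vec n f) = sqf n f / 2 + S / (2 * real d)" .
  have A: "(\<Sum>u<n. \<Sum>v<n. if E u v then (f u)\<^sup>2 else 0) = real d * sqf n f"
  proof -
    have "(\<Sum>u<n. \<Sum>v<n. if E u v then (f u)\<^sup>2 else 0) = (\<Sum>u<n. (f u)\<^sup>2 * (\<Sum>v<n. if E u v then 1 else 0))"
      by (simp add: sum_distrib_left if_distrib cong: if_cong)
    also have "\<dots> = (\<Sum>u<n. (f u)\<^sup>2 * real d)" by (intro sum.cong) (auto simp: deg_sum)
    finally show ?thesis unfolding sqf_def by (simp add: sum_distrib_left mult.commute)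
  qed
  have B: "(\<Sum>u<n. \<Sum>v<n. if E u v then (f v)\<^sup>2 else 0) = real d * sqf n f"
  proof -
    have "(\<Sum>u<n. \<Sum>v<n. if E u v then (f v)\<^sup>2 else 0) = (\<Sum>v<n. \<Sum>u<n. if E u v then (f v)\<^sup>2 else 0)"
      by (rule sum.swap)
    also have "\<dots> = (\<Sum>v<n. \<Sum>u<n. if E v u then (f v)\<^sup>2 else 0)"
      by (intro sum.cong refl) (metis E_sym)
    finally show ?thesis using A by simp
  qed
  have "Qf n E f = (\<Sum>u<n. \<Sum>v<n. (if E u v then (f u)\<^sup>2 else 0) + (if E u v then (f v)\<^sup>2 else 0)
        - 2 * (if E u v then f u * f v else 0))"
    unfolding Qf_def by (intro sum.cong refl) (simp add: power2_diff)
  also have "\<dots> = real d * sqf n f + real d * sqf n f - 2 * S"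
    unfolding S_def using A B by (simp add: sum.distrib sum_subtractf sum_distrib_left)
  finally have "Qf n E f = 2 * real d * sqf n f - 2 * S" by simp
  with l d_pos show ?thesis by (simp add: field_simps)
qed

lemma Qf_zero_const:
  assumes "Qf n E f = 0" "u < n" "v < n"
  shows "f u = f v"
proof -
  have edge: "f a = f b" if "E a b" for a b
  proof -
    have ab: "a < n" "b < n" using E_lt[OF that] by auto
    have "\<forall>a\<in>{..<n}. (\<Sum>b<n. if E a b then (f a - f b)\<^sup>2 else 0) = 0"
      using assms(1) unfolding Qf_def
      by (subst sum_nonneg_eq_0_iff[symmetric]) (auto intro!: sum_nonneg)
    hence "(\<Sum>b<n. if E a b then (f a - f b)\<^sup>2 else 0) = 0" using ab by auto
    hence "\<forall>b\<in>{..<n}. (if E a b then (f a - f b)\<^sup>2 else 0) = 0"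
      by (subst sum_nonneg_eq_0_iff[symmetric]) auto
    hence "(f a - f b)\<^sup>2 = 0" using ab that by force
    thus ?thesis by simp
  qed
  have "E\<^sup>*\<^sup>* u v" using conn assms unfolding connected_graph_def by auto
  thus ?thesis
    by (induct rule: rtranclp_induct) (auto dest: edge)
qed

end




context rgraph begin

lemma P_row: "u < n \<Longrightarrow> (\<Sum>v<n. PP $$ (u,v) * g v) = g u / 2 + (\<Sum>v<n. if E u v then g v else 0) / (2 * real d)"
proof -
  assume u: "u < n"
  have "(\<Sum>v<n. PP $$ (u,v) * g v) = (\<Sum>v<n. (if u = v then g u / 2 else 0) + (if E u v then g v / (2 * real d) else 0))"
    using u E_irrefl by (intro sum.cong) (auto simp: P_entry)
  also have "\<dots> = (\<Sum>v<n. if u = v then g u / 2 else 0) + (\<Sum>v<n. if E u v then g v / (2 * real d) else 0)"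
    by (rule sum.distrib)
  also have "(\<Sum>v<n. if u = v then g u / 2 else 0) = g u / 2" using u by simp
  also have "(\<Sum>v<n. if E u v then g v / (2 * real d) else 0) = (\<Sum>v<n. if E u v then g v else 0) / (2 * real d)"
    unfolding sum_divide_distrib by (intro sum.cong) auto
  finally show ?thesis .
qed

lemma spectral_gap:
  "lambda2 PP < 1 \<and> (\<forall>f. (\<Sum>u<n. f u) = 0 \<longrightarrow> Qf n E f \<ge> 4 * real d * (1 - lambda2 PP) * sqf n f)"
proof -
  obtain vs ls where es: "eig_sys PP n vs ls" using spectral[OF P_carrier P_sym] by blast
  have lvs: "length vs = n" and vsc: "\<And>i. i < n \<Longrightarrow> vs ! i \<in> carrier_vec n"
    and vso: "\<And>i j. i < n \<Longrightarrow> j < n \<Longrightarrow> vs ! i \<bullet> vs ! j = (if i = j then 1 else 0)"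
    and lls: "length ls = n" and ev: "\<And>i. i < n \<Longrightarrow> PP *\<^sub>v (vs ! i) = ls ! i \<cdot>\<^sub>v vs ! i"
    using es unfolding eig_sys_def onb_def by auto
  define xs where "xs = rev (sort ls)"
  have l2: "lambda2 PP = xs ! 1" unfolding lambda2_def xs_def
    using eigenvalues_desc_eq[OF eig_sys_charpoly[OF es P_carrier]] by simp
  have sxs: "sorted_wrt (\<ge>) xs" unfolding xs_def by (simp add: sorted_wrt_rev)
  have sets: "set xs = set ls" unfolding xs_def by simp
  have lxs: "length xs = n" unfolding xs_def using lls by simp
  have mxs: "mset xs = mset ls" unfolding xs_def by simp
  have evfacts: "ls ! i \<le> 1 \<and> (ls ! i = 1 \<longrightarrow> (\<forall>u<n. \<forall>w<n. vs ! i $ u = vs ! i $ w))" if i: "i < n" for i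
  proof -
    define g where "g u = vs ! i $ u" for u
    have vg: "vec n g = vs ! i" unfolding g_def using vsc[OF i] by (intro eq_vecI) auto
    have "vs ! i \<bullet> (PP *\<^sub>v vs ! i) = ls ! i * (vs ! i \<bullet> vs ! i)"
      using ev[OF i] vsc[OF i] by (simp add: scalar_prod_smult_distrib)
    hence li: "ls ! i = vs ! i \<bullet> (PP *\<^sub>v vs ! i)" using vso[OF i i] by simp
    have "vs ! i \<bullet> vs ! i = sqf n g" unfolding sqf_def g_def using vsc[OF i]
      by (auto simp: scalar_prod_def atLeast0LessThan power2_eq_square)
    hence sq1: "sqf n g = 1" using vso[OF i i] by simp
    have lq: "ls ! i = 1 - Qf n E g / (4 * real d)" using li quad[of g] vg sq1 by simp
    have "ls ! i \<le> 1" using lq Qf_nonneg[of n E g] d_pos by simp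
    moreover have "ls ! i = 1 \<longrightarrow> (\<forall>u<n. \<forall>w<n. vs ! i $ u = vs ! i $ w)"
    proof (intro impI allI)
      fix u w assume "ls ! i = 1" "u < n" "w < n"
      hence "Qf n E g = 0" using lq d_pos by simp
      thus "vs ! i $ u = vs ! i $ w" using Qf_zero_const \<open>u < n\<close> \<open>w < n\<close> unfolding g_def by blast
    qed
    ultimately show ?thesis by blast
  qed
  have evc: "vs ! i $ u = vs ! i $ 0" if "i < n" "ls ! i = 1" "u < n" for i u
  proof -
    have "\<forall>u<n. \<forall>w<n. vs ! i $ u = vs ! i $ w" using evfacts[OF that(1)] that(2) by blast
    moreover have "0 < n" using n2 by simp
    ultimately show ?thesis using that(3) by blast
  qed
  have le1: "l \<le> 1" if "l \<in> set ls" for l using that evfacts by (auto simp: in_set_conv_nth lls)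
  have one_in: "1 \<in> set ls"
  proof -
    define one where "one = vec n (\<lambda>_. 1 :: real)"
    have "PP *\<^sub>v one = 1 \<cdot>\<^sub>v one"
    proof (rule eq_vecI)
      fix u assume "u < dim_vec (1 \<cdot>\<^sub>v one)"
      hence u: "u < n" unfolding one_def by simp
      have "(PP *\<^sub>v one) $ u = (\<Sum>v<n. PP $$ (u,v) * 1)"
        using u P_carrier by (auto simp: scalar_prod_def one_def atLeast0LessThan intro!: sum.cong)
      also have "\<dots> = 1/2 + (\<Sum>v<n. if E u v then 1 else 0) / (2 * real d)"
        using P_row[OF u, of "\<lambda>_. 1"] by simp
      also have "\<dots> = 1" using deg_sum[OF u] d_pos by simp
      finally show "(PP *\<^sub>v one) $ u = (1 \<cdot>\<^sub>v one) $ u" using u unfolding one_def by simp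
    qed (use P_carrier in \<open>simp add: one_def\<close>)
    moreover have "one \<noteq> 0\<^sub>v n"
    proof
      assume "one = 0\<^sub>v n"
      hence "one $ 0 = 0\<^sub>v n $ 0" by simp
      thus False using n2 unfolding one_def by simp
    qed
    moreover have "one \<in> carrier_vec n" unfolding one_def by simp
    moreover have "dim_row PP = n" using P_carrier by simp
    ultimately have "eigenvector PP one 1" unfolding eigenvector_def by simp
    hence "eigenvalue PP 1" unfolding eigenvalue_def by blast
    hence "poly (char_poly PP) 1 = 0" using eigenvalue_root_char_poly[OF P_carrier] by simp
    hence "poly (\<Prod>l\<leftarrow>ls. [:- l, 1:]) 1 = 0" using eig_sys_charpoly[OF es P_carrier] by simp
    thus ?thesis by (induct ls) auto
  qed
  have x0: "xs ! 0 = 1"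
  proof -
    have "xs ! 0 \<in> set ls" using sets lxs n2 nth_mem[of 0 xs] by simp
    hence "xs ! 0 \<le> 1" using le1 by blast
    moreover have "1 \<in> set xs" using one_in sets by simp
    then obtain k where k: "k < n" "xs ! k = 1" using lxs by (auto simp: in_set_conv_nth)
    have "xs ! 0 \<ge> xs ! k"
    proof (cases "k = 0")
      case False thus ?thesis using sorted_wrt_nth_less[OF sxs, of 0 k] k lxs by simp
    qed simp
    ultimately show ?thesis using k by simp
  qed
  have top: "l = 1" if "l \<in> set ls" "l > xs ! 1" for l
  proof -
    have "l \<in> set xs" using that(1) sets by simp
    then obtain k where k: "k < n" "xs ! k = l" using lxs by (auto simp: in_set_conv_nth)
    have "k = 0"
    proof (rule ccontr)
      assume "k \<noteq> 0"
      hence "xs ! 1 \<ge> xs ! k"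
        using sorted_wrt_nth_less[OF sxs, of 1 k] k lxs by (cases "k = 1") auto
      thus False using k that by simp
    qed
    thus ?thesis using k x0 by simp
  qed
  have gap: "xs ! 1 < 1"
  proof (rule ccontr)
    assume "\<not> xs ! 1 < 1"
    moreover have "xs ! 1 \<in> set ls" using sets lxs n2 nth_mem[of 1 xs] by simp
    ultimately have x1: "xs ! 1 = 1" using le1 by force
    have "card {k. k < n \<and> ls ! k = 1} = card {k. k < n \<and> xs ! k = 1}"
    proof -
      have "length (filter (\<lambda>y. y = 1) ls) = length (filter (\<lambda>y. y = 1) xs)"
        using mxs by (metis mset_filter size_mset)
      thus ?thesis by (simp add: length_filter_conv_card lls lxs)
    qed
    moreover have sub: "{0, 1} \<subseteq> {k. k < n \<and> xs ! k = 1}" using x0 x1 n2 by auto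
    have fin: "finite {k. k < n \<and> xs ! k = 1}" by simp
    have "card {0, 1::nat} \<le> card {k. k < n \<and> xs ! k = 1}" by (rule card_mono[OF fin sub])
    hence "card {k. k < n \<and> xs ! k = 1} \<ge> 2" by simp
    ultimately have c2: "card {k. k < n \<and> ls ! k = 1} \<ge> 2" by simp
    obtain i j where ij: "i < n" "j < n" "i \<noteq> j" "ls ! i = 1" "ls ! j = 1"
    proof -
      have "{k. k < n \<and> ls ! k = 1} \<noteq> {}" using c2 by (intro notI) simp
      then obtain i where i: "i \<in> {k. k < n \<and> ls ! k = 1}" by blast
      have "{k. k < n \<and> ls ! k = 1} \<noteq> {i}" using c2 by (intro notI) simp
      then obtain j where "j \<in> {k. k < n \<and> ls ! k = 1}" "j \<noteq> i" using i by blast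
      thus ?thesis using that i by blast
    qed
    define a where "a = vs ! i $ 0"
    have a: "\<And>u. u < n \<Longrightarrow> vs ! i $ u = a" unfolding a_def using evc[OF ij(1) ij(4)] .
    define b where "b = vs ! j $ 0"
    have b: "\<And>u. u < n \<Longrightarrow> vs ! j $ u = b" unfolding b_def using evc[OF ij(2) ij(5)] .
    have "vs ! i \<bullet> vs ! i = real n * a * a" using vsc[OF ij(1)] a by (simp add: scalar_prod_def)
    hence "real n * a * a = 1" using vso[OF ij(1) ij(1)] by simp
    moreover have "vs ! i \<bullet> vs ! j = real n * a * b" using vsc[OF ij(1)] vsc[OF ij(2)] a b by (simp add: scalar_prod_def)
    hence "real n * a * b = 0" using vso[OF ij(1) ij(2)] ij(3) by simp
    moreover have "vs ! j \<bullet> vs ! j = real n * b * b" using vsc[OF ij(2)] b by (simp add: scalar_prod_def)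
    hence "real n * b * b = 1" using vso[OF ij(2) ij(2)] by simp
    ultimately have "real n * a * a = 1" "real n * a * b = 0" "real n * b * b = 1" by auto
    hence "real n * a \<noteq> 0" by auto
    hence "b = 0" using \<open>real n * a * b = 0\<close> by simp
    thus False using \<open>real n * b * b = 1\<close> by simp
  qed
  have bound: "Qf n E f \<ge> 4 * real d * (1 - xs ! 1) * sqf n f" if f0: "(\<Sum>u<n. f u) = 0" for f
  proof -
    define x where "x = vec n f"
    have xc: "x \<in> carrier_vec n" unfolding x_def by simp
    note pv = eig_sys_parseval[OF es P_carrier xc]
    have tm: "ls ! i * (vs ! i \<bullet> x)\<^sup>2 \<le> xs ! 1 * (vs ! i \<bullet> x)\<^sup>2" if i: "i < n" for i
    proof (cases "ls ! i \<le> xs ! 1")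
      case True thus ?thesis by (simp add: mult_right_mono)
    next
      case False
      hence "ls ! i = 1" using top[of "ls ! i"] i lls by simp
      define a where "a = vs ! i $ 0"
      have a: "\<And>u. u < n \<Longrightarrow> vs ! i $ u = a" unfolding a_def using evc[OF i \<open>ls ! i = 1\<close>] .
      have "vs ! i \<bullet> x = (\<Sum>u<n. a * f u)" using vsc[OF i] a
        by (auto simp: scalar_prod_def x_def atLeast0LessThan intro!: sum.cong)
      also have "\<dots> = 0" using f0 by (simp add: sum_distrib_left[symmetric])
      finally show ?thesis by simp
    qed
    have "x \<bullet> (PP *\<^sub>v x) \<le> xs ! 1 * (x \<bullet> x)"
      unfolding pv sum_distrib_left by (intro sum_mono tm) simp
    moreover have "x \<bullet> x = sqf n f" unfolding x_def sqf_def
      by (auto simp: scalar_prod_def atLeast0LessThan power2_eq_square)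
    moreover have "x \<bullet> (PP *\<^sub>v x) = sqf n f - Qf n E f / (4 * real d)" unfolding x_def by (rule quad)
    ultimately have "sqf n f - Qf n E f / (4 * real d) \<le> xs ! 1 * sqf n f" by simp
    thus ?thesis using d_pos by (simp add: field_simps)
  qed
  show ?thesis using gap bound l2 by simp
qed

end


context rgraph begin

lemma finite_edge_set: "finite (edge_set n E)"
proof -
  have "edge_set n E \<subseteq> (\<lambda>(u,v). {u,v}) ` ({..<n} \<times> {..<n})"
  proof
    fix e assume "e \<in> edge_set n E"
    then obtain u v where "e = {u,v}" "u < n" "v < n" unfolding edge_set_def by blast
    thus "e \<in> (\<lambda>(u,v). {u,v}) ` ({..<n} \<times> {..<n})" by (intro image_eqI[of _ _ "(u,v)"]) auto
  qed
  thus ?thesis by (rule finite_subset) auto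
qed

lemma match_edge:
  assumes "is_matching n E M" "{v,w} \<in> M"
  shows "v < n \<and> w < n \<and> v \<noteq> w \<and> E v w"
proof -
  have "{v,w} \<in> edge_set n E" using assms unfolding is_matching_def by auto
  then obtain a b where ab: "{v,w} = {a,b}" "a < n" "b < n" "E a b" unfolding edge_set_def by auto
  have "a \<noteq> b" using ab(4) E_irrefl by auto
  from ab(1) have "(v = a \<and> w = b) \<or> (v = b \<and> w = a)" by (simp add: doubleton_eq_iff)
  thus ?thesis
  proof
    assume "v = a \<and> w = b" thus ?thesis using ab \<open>a \<noteq> b\<close> by simp
  next
    assume "v = b \<and> w = a" thus ?thesis using ab \<open>a \<noteq> b\<close> E_sym[OF ab(4)] by simp
  qed
qed

lemma match_unique:
  assumes "is_matching n E M" "{v,w} \<in> M" "{v,w'} \<in> M"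
  shows "w = w'"
proof (rule ccontr)
  assume ww: "w \<noteq> w'"
  have vw: "v \<noteq> w" using match_edge[OF assms(1,2)] by auto
  have ne: "{v,w} \<noteq> {v,w'}"
  proof
    assume eq: "{v,w} = {v,w'}"
    have "w \<in> {v,w'}" unfolding eq[symmetric] by simp
    thus False using vw ww by simp
  qed
  have "\<forall>e\<in>M. \<forall>e'\<in>M. e \<noteq> e' \<longrightarrow> e \<inter> e' = {}" using assms(1) unfolding is_matching_def by simp
  hence "\<forall>e'\<in>M. {v,w} \<noteq> e' \<longrightarrow> {v,w} \<inter> e' = {}" using assms(2) by (rule bspec)
  hence "{v,w} \<noteq> {v,w'} \<longrightarrow> {v,w} \<inter> {v,w'} = {}" using assms(3) by (rule bspec)
  hence "{v,w} \<inter> {v,w'} = {}" using ne by (rule mp)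
  thus False by simp
qed

definition Dm :: "nat set set \<Rightarrow> (nat \<Rightarrow> real) \<Rightarrow> real" where
  "Dm M x = (\<Sum>v<n. \<Sum>w<n. if {v,w} \<in> M then (x v - x w)\<^sup>2 else 0)"

lemma mm_partner:
  assumes M: "is_matching n E M" and w: "{v,w} \<in> M"
  shows "matching_matrix M u v = (if u = v then 1/2 else if u = w then 1/2 else 0)"
proof -
  have vw: "v \<noteq> w" using match_edge[OF M w] by simp
  have ex: "\<exists>w. {v,w} \<in> M" using w by blast
  have iff: "{u,v} \<in> M \<longleftrightarrow> u = w"
  proof
    assume "{u,v} \<in> M"
    hence "{v,u} \<in> M" by (simp add: insert_commute)
    thus "u = w" using match_unique[OF M w] by simp
  next
    assume "u = w" thus "{u,v} \<in> M" using w by (simp add: insert_commute)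
  qed
  show ?thesis
  proof (cases "u = v")
    case True thus ?thesis unfolding matching_matrix_def using ex by simp
  next
    case False thus ?thesis unfolding matching_matrix_def using iff by simp
  qed
qed

lemma mm_nopartner:
  assumes nw: "\<not> (\<exists>w. {v,w} \<in> M)"
  shows "matching_matrix M u v = (if u = v then 1 else 0)"
proof -
  have "{u,v} \<notin> M"
  proof
    assume "{u,v} \<in> M"
    hence "{v,u} \<in> M" by (simp add: insert_commute)
    thus False using nw by blast
  qed
  thus ?thesis unfolding matching_matrix_def using nw by simp
qed

lemma sum_partner:
  assumes M: "is_matching n E M" and w: "{v,w} \<in> M"
  shows "(\<Sum>w'<n. if {v,w'} \<in> M then g w' else 0) = (g w :: real)"
proof -
  have wn: "w < n" using match_edge[OF M w] by simp
  have "(\<Sum>w'<n. if {v,w'} \<in> M then g w' else 0) = (\<Sum>w'<n. if w' = w then g w' else 0)"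
  proof (rule sum.cong[OF refl])
    fix w' assume "w' \<in> {..<n}"
    have "{v,w'} \<in> M \<longleftrightarrow> w' = w"
    proof
      assume "{v,w'} \<in> M" thus "w' = w" using match_unique[OF M w] by simp
    qed (use w in simp)
    thus "(if {v,w'} \<in> M then g w' else 0) = (if w' = w then g w' else 0)" by simp
  qed
  also have "\<dots> = g w" using wn by simp
  finally show ?thesis .
qed

lemma step_point:
  assumes M: "is_matching n E M" and v: "v < n"
  shows "cont_step n M x v = x v + (\<Sum>w<n. if {v,w} \<in> M then (x w - x v) / 2 else 0)
     \<and> (cont_step n M x v)\<^sup>2 = (x v)\<^sup>2 + (\<Sum>w<n. if {v,w} \<in> M then (x v + x w)\<^sup>2 / 4 - (x v)\<^sup>2 else 0)"
proof (cases "\<exists>w. {v,w} \<in> M")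
  case True
  then obtain w where w: "{v,w} \<in> M" by blast
  have wn: "w < n" and vw: "v \<noteq> w" using match_edge[OF M w] by auto
  have "cont_step n M x v = (\<Sum>u<n. x u * (if u = v then 1/2 else if u = w then 1/2 else 0))"
    unfolding cont_step_def mm_partner[OF M w] ..
  also have "\<dots> = (\<Sum>u<n. (if u = v then x v / 2 else 0) + (if u = w then x w / 2 else 0))"
    by (rule sum.cong[OF refl]) (use vw in auto)
  also have "\<dots> = (\<Sum>u<n. if u = v then x v / 2 else 0) + (\<Sum>u<n. if u = w then x w / 2 else 0)"
    by (rule sum.distrib)
  also have "\<dots> = x v / 2 + x w / 2" using v wn by simp
  finally have cs: "cont_step n M x v = x v / 2 + x w / 2" .
  show ?thesis unfolding sum_partner[OF M w] cs by (simp add: field_simps power2_eq_square)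
next
  case False
  have cs: "cont_step n M x v = x v"
  proof -
    have "cont_step n M x v = (\<Sum>u<n. if u = v then x v else 0)"
      unfolding cont_step_def mm_nopartner[OF False] by (rule sum.cong[OF refl]) simp
    also have "\<dots> = x v" using v by simp
    finally show ?thesis .
  qed
  have z: "(\<Sum>w<n. if {v,w} \<in> M then g w else 0) = 0" for g :: "nat \<Rightarrow> real"
    using False by simp
  show ?thesis unfolding cs z by simp
qed

lemma sum_swap_sym:
  fixes M :: "nat set set" and g :: "nat \<Rightarrow> nat \<Rightarrow> real"
  shows "(\<Sum>v<n. \<Sum>w<n. if {v,w} \<in> M then g v w else 0) = (\<Sum>v<n. \<Sum>w<n. if {v,w} \<in> M then g w v else 0)"
proof -
  have "(\<Sum>v<n. \<Sum>w<n. if {v,w} \<in> M then g v w else 0) = (\<Sum>w<n. \<Sum>v<n. if {v,w} \<in> M then g v w else 0)"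
    by (rule sum.swap)
  also have "\<dots> = (\<Sum>w<n. \<Sum>v<n. if {w,v} \<in> M then g v w else 0)"
    by (simp add: insert_commute)
  finally show ?thesis .
qed

lemma sum_step:
  assumes M: "is_matching n E M"
  shows "(\<Sum>v<n. cont_step n M x v) = (\<Sum>v<n. x v)"
proof -
  have "(\<Sum>v<n. cont_step n M x v) = (\<Sum>v<n. x v + (\<Sum>w<n. if {v,w} \<in> M then (x w - x v) / 2 else 0))"
    using step_point[OF M] by (intro sum.cong) auto
  also have "\<dots> = (\<Sum>v<n. x v) + (\<Sum>v<n. \<Sum>w<n. if {v,w} \<in> M then (x w - x v) / 2 else 0)"
    by (simp add: sum.distrib)
  also have "(\<Sum>v<n. \<Sum>w<n. if {v,w} \<in> M then (x w - x v) / 2 else 0) = 0"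
  proof -
    let ?S = "(\<Sum>v<n. \<Sum>w<n. if {v,w} \<in> M then (x w - x v) / 2 else 0)"
    have "?S = (\<Sum>v<n. \<Sum>w<n. if {v,w} \<in> M then (x v - x w) / 2 else 0)"
      by (rule sum_swap_sym)
    also have "\<dots> = (\<Sum>v<n. \<Sum>w<n. - (if {v,w} \<in> M then (x w - x v) / 2 else 0))"
      by (intro sum.cong refl) (simp add: field_simps)
    also have "\<dots> = - ?S" by (simp only: sum_negf)
    finally show ?thesis by simp
  qed
  finally show ?thesis by simp
qed

lemma sq_step:
  assumes M: "is_matching n E M"
  shows "sqf n (cont_step n M x) = sqf n x - Dm M x / 4"
proof -
  have "sqf n (cont_step n M x) = (\<Sum>v<n. (x v)\<^sup>2 + (\<Sum>w<n. if {v,w} \<in> M then (x v + x w)\<^sup>2 / 4 - (x v)\<^sup>2 else 0))"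
    unfolding sqf_def by (intro sum.cong refl conjunct2[OF step_point[OF M]]) simp
  also have "\<dots> = sqf n x + (\<Sum>v<n. \<Sum>w<n. if {v,w} \<in> M then (x v + x w)\<^sup>2 / 4 - (x v)\<^sup>2 else 0)"
    unfolding sqf_def by (simp add: sum.distrib)
  also have "(\<Sum>v<n. \<Sum>w<n. if {v,w} \<in> M then (x v + x w)\<^sup>2 / 4 - (x v)\<^sup>2 else 0)
      = (\<Sum>v<n. \<Sum>w<n. (if {v,w} \<in> M then (x w)\<^sup>2 / 2 - (x v)\<^sup>2 / 2 else 0) - (if {v,w} \<in> M then (x v - x w)\<^sup>2 / 4 else 0))"
    by (intro sum.cong refl) (auto simp: power2_eq_square field_simps)
  also have "\<dots> = (\<Sum>v<n. \<Sum>w<n. if {v,w} \<in> M then (x w)\<^sup>2 / 2 - (x v)\<^sup>2 / 2 else 0)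
      - (\<Sum>v<n. \<Sum>w<n. if {v,w} \<in> M then (x v - x w)\<^sup>2 / 4 else 0)"
    by (simp only: sum_subtractf)
  also have "(\<Sum>v<n. \<Sum>w<n. if {v,w} \<in> M then (x v - x w)\<^sup>2 / 4 else 0) = Dm M x / 4"
    unfolding Dm_def sum_divide_distrib by (intro sum.cong refl) auto
  also have "(\<Sum>v<n. \<Sum>w<n. if {v,w} \<in> M then (x w)\<^sup>2 / 2 - (x v)\<^sup>2 / 2 else 0) = 0"
  proof -
    let ?S = "(\<Sum>v<n. \<Sum>w<n. if {v,w} \<in> M then (x w)\<^sup>2 / 2 - (x v)\<^sup>2 / 2 else 0)"
    have "?S = (\<Sum>v<n. \<Sum>w<n. if {v,w} \<in> M then (x v)\<^sup>2 / 2 - (x w)\<^sup>2 / 2 else 0)"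
      by (rule sum_swap_sym)
    also have "\<dots> = (\<Sum>v<n. \<Sum>w<n. - (if {v,w} \<in> M then (x w)\<^sup>2 / 2 - (x v)\<^sup>2 / 2 else 0))"
      by (intro sum.cong refl) auto
    also have "\<dots> = - ?S" by (simp only: sum_negf)
    finally show ?thesis by simp
  qed
  finally show ?thesis by simp
qed

end


definition Fv :: "nat \<Rightarrow> (nat \<Rightarrow> real) \<Rightarrow> real" where
  "Fv n x = sqf n (\<lambda>v. x v - (\<Sum>u<n. x u) / real n)"

lemma Fv_nonneg: "Fv n x \<ge> 0"
  unfolding Fv_def sqf_def by (intro sum_nonneg) auto

lemma Fv_alt: "n > 0 \<Longrightarrow> Fv n x = sqf n x - (\<Sum>u<n. x u)\<^sup>2 / real n"
proof -
  assume n: "n > 0"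
  define S where "S = (\<Sum>u<n. x u)"
  have "Fv n x = (\<Sum>v<n. (x v)\<^sup>2 - 2 * (S / real n) * x v + (S / real n)\<^sup>2)"
    unfolding Fv_def sqf_def S_def by (intro sum.cong refl) (simp add: power2_diff)
  also have "\<dots> = sqf n x - 2 * (S / real n) * S + real n * (S / real n)\<^sup>2"
    unfolding sqf_def S_def by (simp add: sum.distrib sum_subtractf sum_distrib_left)
  also have "\<dots> = sqf n x - S\<^sup>2 / real n" using n by (simp add: field_simps power2_eq_square)
  finally show ?thesis unfolding S_def .
qed

lemma discrepancy_le_iff:
  assumes "n > 0"
  shows "discrepancy n \<xi> \<le> c \<longleftrightarrow> (\<forall>a<n. \<forall>b<n. \<bar>\<xi> a - \<xi> b\<bar> \<le> c)"
proof -
  have fin: "finite {\<bar>\<xi> u - \<xi> v\<bar> | u v. u < n \<and> v < n}"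
    by (rule finite_image_set2) auto
  have ne: "{\<bar>\<xi> u - \<xi> v\<bar> | u v. u < n \<and> v < n} \<noteq> {}" using assms by blast
  show ?thesis unfolding discrepancy_def using Max_le_iff[OF fin ne] by blast
qed

definition rowv :: "nat \<Rightarrow> (nat \<Rightarrow> nat set set) \<Rightarrow> nat \<Rightarrow> nat \<Rightarrow> (nat \<Rightarrow> real)" where
  "rowv n ms w t = cont_proc n ms 0 (\<lambda>u. if u = w then 1 else 0) t"

definition Phi :: "nat \<Rightarrow> (nat \<Rightarrow> nat set set) \<Rightarrow> nat \<Rightarrow> real" where
  "Phi n ms t = (\<Sum>w<n. Fv n (rowv n ms w t))"

lemma Phi_nonneg: "Phi n ms t \<ge> 0"
  unfolding Phi_def by (intro sum_nonneg Fv_nonneg)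

lemma cont_proc_cong:
  "(\<And>i. 1 \<le> i \<Longrightarrow> i \<le> t \<Longrightarrow> ms i = ms' i) \<Longrightarrow> cont_proc n ms 0 \<xi> t = cont_proc n ms' 0 \<xi> t"
  by (induct t) auto

lemma cont_proc_linear:
  "v < n \<Longrightarrow> cont_proc n ms 0 \<xi> t v = (\<Sum>w<n. \<xi> w * rowv n ms w t v)"
proof (induct t arbitrary: v)
  case 0
  have "(\<Sum>w<n. \<xi> w * (if v = w then 1 else 0)) = \<xi> v" using 0 by (simp add: if_distrib cong: if_cong)
  thus ?case unfolding rowv_def by simp
next
  case (Suc t)
  have "cont_proc n ms 0 \<xi> (Suc t) v = (\<Sum>u<n. cont_proc n ms 0 \<xi> t u * matching_matrix (ms (Suc t)) u v)"
    by (simp add: cont_step_def)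
  also have "\<dots> = (\<Sum>u<n. (\<Sum>w<n. \<xi> w * rowv n ms w t u) * matching_matrix (ms (Suc t)) u v)"
    by (intro sum.cong refl) (simp add: Suc)
  also have "\<dots> = (\<Sum>u<n. \<Sum>w<n. \<xi> w * (rowv n ms w t u * matching_matrix (ms (Suc t)) u v))"
    by (simp add: sum_distrib_right mult.assoc)
  also have "\<dots> = (\<Sum>w<n. \<Sum>u<n. \<xi> w * (rowv n ms w t u * matching_matrix (ms (Suc t)) u v))"
    by (rule sum.swap)
  also have "\<dots> = (\<Sum>w<n. \<xi> w * rowv n ms w (Suc t) v)"
    by (simp add: sum_distrib_left[symmetric] rowv_def cont_step_def)
  finally show ?case .
qed

context rgraph begin

lemma Fv_step: "is_matching n E M \<Longrightarrow> Fv n (cont_step n M x) = Fv n x - Dm M x / 4"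
  using n2 by (simp add: Fv_alt sum_step sq_step)

lemma cont_proc_one:
  assumes ms: "\<And>i. 1 \<le> i \<Longrightarrow> i \<le> t \<Longrightarrow> is_matching n E (ms i)"
  shows "v < n \<Longrightarrow> cont_proc n ms 0 (\<lambda>_. 1) t v = 1"
  using ms
proof (induct t arbitrary: v)
  case 0 thus ?case by simp
next
  case (Suc t)
  have M: "is_matching n E (ms (Suc t))" using Suc.prems by simp
  have IH: "\<And>u. u < n \<Longrightarrow> cont_proc n ms 0 (\<lambda>_. 1) t u = 1" using Suc by simp
  have "cont_proc n ms 0 (\<lambda>_. 1) (Suc t) v = cont_step n (ms (Suc t)) (cont_proc n ms 0 (\<lambda>_. 1) t) v" by simp
  also have "\<dots> = 1" using conjunct1[OF step_point[OF M Suc.prems(1)]] IH Suc.prems(1)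
    by (simp cong: if_cong)
  finally show ?case .
qed

lemma col_sum:
  assumes ms: "\<And>i. 1 \<le> i \<Longrightarrow> i \<le> t \<Longrightarrow> is_matching n E (ms i)" and v: "v < n"
  shows "(\<Sum>w<n. rowv n ms w t v) = 1"
  using cont_proc_linear[OF v, of ms "\<lambda>_. 1" t] cont_proc_one[OF ms v] by simp

lemma row_sum:
  assumes ms: "\<And>i. 1 \<le> i \<Longrightarrow> i \<le> t \<Longrightarrow> is_matching n E (ms i)" and w: "w < n"
  shows "(\<Sum>v<n. rowv n ms w t v) = 1"
  using ms
proof (induct t)
  case 0 thus ?case using w by (simp add: rowv_def)
next
  case (Suc t)
  have M: "is_matching n E (ms (Suc t))" using Suc.prems by simp
  have "(\<Sum>v<n. rowv n ms w (Suc t) v) = (\<Sum>v<n. rowv n ms w t v)"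
    unfolding rowv_def using sum_step[OF M] by simp
  thus ?case using Suc by simp
qed

end


context rgraph begin

lemma abs_sum_bound:
  fixes a :: "nat \<Rightarrow> real"
  assumes "(\<Sum>w<n. (a w)\<^sup>2) \<le> B"
  shows "(\<Sum>w<n. \<bar>a w\<bar>)\<^sup>2 \<le> real n * B"
proof -
  have "(\<Sum>w<n. \<bar>a w\<bar> * 1)\<^sup>2 \<le> (\<Sum>w<n. \<bar>a w\<bar>\<^sup>2) * (\<Sum>w<n. 1\<^sup>2)"
    by (rule Cauchy_Schwarz_ineq_sum)
  also have "\<dots> = real n * (\<Sum>w<n. (a w)\<^sup>2)" by simp
  also have "\<dots> \<le> real n * B" using assms by (intro mult_left_mono) auto
  finally show ?thesis by simp
qed

lemma smooth_of_Phi: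
  assumes ms: "\<And>i. 1 \<le> i \<Longrightarrow> i \<le> t \<Longrightarrow> is_matching n E (ms i)"
    and K: "K > 0" and eps: "\<epsilon> > 0"
    and Ph: "Phi n ms t \<le> \<epsilon>\<^sup>2 / (4 * K\<^sup>2 * real n)"
  shows "smoothing n ms 0 t K \<epsilon>"
proof -
  have n0: "n > 0" using n2 by simp
  define r where "r w = rowv n ms w t" for w
  define a where "a w u = r w u - 1 / real n" for w u
  have Fr: "Fv n (r w) = (\<Sum>v<n. (a w v)\<^sup>2)" if w: "w < n" for w
    unfolding Fv_def sqf_def a_def r_def using row_sum[OF ms w] by simp
  have Sb: "(\<Sum>w<n. \<bar>a w u\<bar>) \<le> \<epsilon> / (2 * K)" if u: "u < n" for u
  proof -
    have "(\<Sum>w<n. (a w u)\<^sup>2) \<le> (\<Sum>w<n. Fv n (r w))"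
    proof (rule sum_mono)
      fix w assume "w \<in> {..<n}"
      hence w: "w < n" by simp
      have "(a w u)\<^sup>2 \<le> (\<Sum>v<n. (a w v)\<^sup>2)" using u by (intro member_le_sum) auto
      thus "(a w u)\<^sup>2 \<le> Fv n (r w)" using Fr[OF w] by simp
    qed
    also have "\<dots> = Phi n ms t" unfolding Phi_def r_def ..
    also have "\<dots> \<le> \<epsilon>\<^sup>2 / (4 * K\<^sup>2 * real n)" by (rule Ph)
    finally have "(\<Sum>w<n. \<bar>a w u\<bar>)\<^sup>2 \<le> real n * (\<epsilon>\<^sup>2 / (4 * K\<^sup>2 * real n))"
      by (rule abs_sum_bound)
    also have "\<dots> = (\<epsilon> / (2 * K))\<^sup>2" using n0 K by (simp add: field_simps power2_eq_square)
    finally show ?thesis by (rule power2_le_imp_le) (use eps K in simp)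
  qed
  show ?thesis unfolding smoothing_def
  proof (intro allI impI)
    fix \<xi> assume dk: "discrepancy n \<xi> \<le> K"
    hence pw: "\<And>p q. p < n \<Longrightarrow> q < n \<Longrightarrow> \<bar>\<xi> p - \<xi> q\<bar> \<le> K" using discrepancy_le_iff[OF n0] by blast
    show "discrepancy n (cont_proc n ms 0 \<xi> (t - 0)) \<le> \<epsilon>"
      unfolding discrepancy_le_iff[OF n0]
    proof (intro allI impI)
      fix u v assume u: "u < n" and v: "v < n"
      have "cont_proc n ms 0 \<xi> (t - 0) u - cont_proc n ms 0 \<xi> (t - 0) v = (\<Sum>w<n. \<xi> w * (r w u - r w v))"
        using cont_proc_linear[OF u] cont_proc_linear[OF v] unfolding r_def
        by (simp add: sum_subtractf[symmetric] right_diff_distrib)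
      also have "\<dots> = (\<Sum>w<n. (\<xi> w - \<xi> 0) * (a w u - a w v))"
      proof -
        have "(\<Sum>w<n. \<xi> 0 * (r w u - r w v)) = \<xi> 0 * ((\<Sum>w<n. r w u) - (\<Sum>w<n. r w v))"
          by (simp add: sum_distrib_left sum_subtractf right_diff_distrib)
        also have "\<dots> = 0" using col_sum[OF ms u] col_sum[OF ms v] unfolding r_def by simp
        finally have z: "(\<Sum>w<n. \<xi> 0 * (r w u - r w v)) = 0" .
        have "(\<Sum>w<n. \<xi> w * (r w u - r w v)) = (\<Sum>w<n. \<xi> w * (r w u - r w v)) - (\<Sum>w<n. \<xi> 0 * (r w u - r w v))"
          using z by simp
        also have "\<dots> = (\<Sum>w<n. (\<xi> w - \<xi> 0) * (r w u - r w v))"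
          by (simp add: sum_subtractf[symmetric] left_diff_distrib)
        also have "\<dots> = (\<Sum>w<n. (\<xi> w - \<xi> 0) * (a w u - a w v))"
          unfolding a_def by simp
        finally show ?thesis .
      qed
      finally have eq: "cont_proc n ms 0 \<xi> (t - 0) u - cont_proc n ms 0 \<xi> (t - 0) v = (\<Sum>w<n. (\<xi> w - \<xi> 0) * (a w u - a w v))" .
      have "\<bar>\<Sum>w<n. (\<xi> w - \<xi> 0) * (a w u - a w v)\<bar> \<le> (\<Sum>w<n. \<bar>(\<xi> w - \<xi> 0) * (a w u - a w v)\<bar>)"
        by (rule sum_abs)
      also have "\<dots> \<le> (\<Sum>w<n. K * (\<bar>a w u\<bar> + \<bar>a w v\<bar>))"
      proof (rule sum_mono)
        fix w assume "w \<in> {..<n}"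
        hence w: "w < n" by simp
        have "\<bar>(\<xi> w - \<xi> 0) * (a w u - a w v)\<bar> = \<bar>\<xi> w - \<xi> 0\<bar> * \<bar>a w u - a w v\<bar>" by (simp add: abs_mult)
        also have "\<dots> \<le> K * (\<bar>a w u\<bar> + \<bar>a w v\<bar>)"
          using pw[OF w n0] K by (intro mult_mono) (auto simp: abs_triangle_ineq4)
        finally show "\<bar>(\<xi> w - \<xi> 0) * (a w u - a w v)\<bar> \<le> K * (\<bar>a w u\<bar> + \<bar>a w v\<bar>)" .
      qed
      also have "\<dots> = K * ((\<Sum>w<n. \<bar>a w u\<bar>) + (\<Sum>w<n. \<bar>a w v\<bar>))"
        by (simp add: distrib_left sum.distrib sum_distrib_left)
      also have "\<dots> \<le> K * (\<epsilon> / (2 * K) + \<epsilon> / (2 * K))"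
        using Sb[OF u] Sb[OF v] K by (intro mult_left_mono) auto
      also have "\<dots> = \<epsilon>" using K by (simp add: field_simps)
      finally show "\<bar>cont_proc n ms 0 \<xi> (t - 0) u - cont_proc n ms 0 \<xi> (t - 0) v\<bar> \<le> \<epsilon>"
        unfolding eq .
    qed
  qed
qed

end


lemma exp_insert:
  fixes h :: "(nat \<Rightarrow> 'b) \<Rightarrow> real" and p :: "nat \<Rightarrow> 'b pmf"
  assumes A: "finite A" "x \<notin> A" and fx: "finite (set_pmf (p x))"
    and fA: "finite (set_pmf (Pi_pmf A dflt p))"
  shows "measure_pmf.expectation (Pi_pmf (insert x A) dflt p) h =
    measure_pmf.expectation (Pi_pmf A dflt p) (\<lambda>f. measure_pmf.expectation (p x) (\<lambda>y. h (f(x := y))))"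
proof -
  let ?Pi = "Pi_pmf A dflt p"
  let ?S = "set_pmf (p x)"
  have eq: "Pi_pmf (insert x A) dflt p = p x \<bind> (\<lambda>y. map_pmf (\<lambda>f. f(x := y)) ?Pi)"
    unfolding Pi_pmf_insert'[OF A] map_pmf_def ..
  have "measure_pmf.expectation (Pi_pmf (insert x A) dflt p) h =
      (\<Sum>y\<in>?S. pmf (p x) y *\<^sub>R measure_pmf.expectation (map_pmf (\<lambda>f. f(x := y)) ?Pi) h)"
    unfolding eq by (rule pmf_expectation_bind[OF fx]) (use fA in auto)
  also have "\<dots> = (\<Sum>y\<in>?S. pmf (p x) y * measure_pmf.expectation ?Pi (\<lambda>f. h (f(x := y))))"
    by (simp add: integral_map_pmf)
  also have "\<dots> = (\<Sum>y\<in>?S. measure_pmf.expectation ?Pi (\<lambda>f. pmf (p x) y * h (f(x := y))))"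
    by (simp add: integral_mult_right_zero)
  also have "\<dots> = measure_pmf.expectation ?Pi (\<lambda>f. \<Sum>y\<in>?S. pmf (p x) y * h (f(x := y)))"
    by (simp add: integral_sum integrable_measure_pmf_finite[OF fA])
  also have "\<dots> = measure_pmf.expectation ?Pi (\<lambda>f. measure_pmf.expectation (p x) (\<lambda>y. h (f(x := y))))"
  proof (rule Bochner_Integration.integral_cong[OF refl])
    fix f
    show "(\<Sum>y\<in>?S. pmf (p x) y * h (f(x := y))) = measure_pmf.expectation (p x) (\<lambda>y. h (f(x := y)))"
      by (subst integral_measure_pmf[OF fx]) auto
  qed
  finally show ?thesis .
qed

locale rproc = rgraph +
  fixes \<mu> :: "nat \<Rightarrow> nat set set pmf"
  assumes hmat: "\<And>t. t \<ge> 1 \<Longrightarrow> set_pmf (\<mu> t) \<subseteq> {M. is_matching n E M}"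
    and ppos: "p_min n E \<mu> > 0"
begin

abbreviation "pm \<equiv> p_min n E \<mu>"
abbreviation "lam \<equiv> lambda2 PP"
definition "rr = pm * real d * (1 - lam)"

lemma fin_mu: "t \<ge> 1 \<Longrightarrow> finite (set_pmf (\<mu> t))"
proof -
  assume t: "t \<ge> 1"
  have "set_pmf (\<mu> t) \<subseteq> Pow (edge_set n E)" using hmat[OF t] unfolding is_matching_def by auto
  thus ?thesis by (rule finite_subset) (simp add: finite_edge_set)
qed

lemma fin_Pi: "finite (set_pmf (Pi_pmf {1..t} {} \<mu>))"
  unfolding set_Pi_pmf[OF finite_atLeastAtMost] by (rule finite_PiE_dflt) (auto intro: fin_mu)

lemma Pi_match: "ms \<in> set_pmf (Pi_pmf {1..t} {} \<mu>) \<Longrightarrow> 1 \<le> i \<Longrightarrow> i \<le> t \<Longrightarrow> is_matching n E (ms i)"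
  unfolding set_Pi_pmf[OF finite_atLeastAtMost] PiE_dflt_def using hmat by fastforce

lemma pmin_le:
  assumes t: "t \<ge> 1" and e: "E v w"
  shows "pm \<le> measure_pmf.prob (\<mu> t) {M. {v,w} \<in> M}"
proof -
  have ee: "{v,w} \<in> edge_set n E" using e E_lt unfolding edge_set_def by blast
  define g where "g s = (INF e\<in>edge_set n E. measure_pmf.prob (\<mu> s) {M. e \<in> M})" for s
  have g0: "g s \<ge> 0" for s unfolding g_def using ee by (intro cINF_greatest) auto
  have "pm \<le> g t" unfolding p_min_def g_def[symmetric]
    by (rule cINF_lower) (use t g0 in \<open>auto intro!: bdd_belowI[of _ 0]\<close>)
  also have "g t \<le> measure_pmf.prob (\<mu> t) {M. {v,w} \<in> M}" unfolding g_def
    by (rule cINF_lower[OF _ ee]) (auto intro!: bdd_belowI[of _ 0])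
  finally show ?thesis .
qed

lemma exp_Dm:
  assumes t: "t \<ge> 1"
  shows "measure_pmf.expectation (\<mu> t) (\<lambda>M. Dm M x) \<ge> pm * Qf n E x"
proof -
  have int: "integrable (measure_pmf (\<mu> t)) f" for f :: "nat set set \<Rightarrow> real"
    by (rule integrable_measure_pmf_finite[OF fin_mu[OF t]])
  have ind: "measure_pmf.expectation (\<mu> t) (\<lambda>M. if {v,w} \<in> M then c else 0) = c * measure_pmf.prob (\<mu> t) {M. {v,w} \<in> M}"
    for v w and c :: real
  proof -
    have "(\<lambda>M. if {v,w} \<in> M then c else 0) = (\<lambda>M. c * indicator {M. {v,w} \<in> M} M)"
      by (auto simp: indicator_def)
    thus ?thesis by (simp add: integral_indicator)
  qed
  have "measure_pmf.expectation (\<mu> t) (\<lambda>M. Dm M x) =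
      (\<Sum>v<n. \<Sum>w<n. (x v - x w)\<^sup>2 * measure_pmf.prob (\<mu> t) {M. {v,w} \<in> M})"
    unfolding Dm_def by (simp add: integral_sum int ind)
  also have "\<dots> \<ge> (\<Sum>v<n. \<Sum>w<n. if E v w then pm * (x v - x w)\<^sup>2 else 0)"
  proof (intro sum_mono)
    fix v w
    show "(if E v w then pm * (x v - x w)\<^sup>2 else 0) \<le> (x v - x w)\<^sup>2 * measure_pmf.prob (\<mu> t) {M. {v,w} \<in> M}"
    proof (cases "E v w")
      case True
      thus ?thesis using mult_right_mono[OF pmin_le[OF t True], of "(x v - x w)\<^sup>2"] by (simp add: mult.commute)
    qed simp
  qed
  also have "(\<Sum>v<n. \<Sum>w<n. if E v w then pm * (x v - x w)\<^sup>2 else 0) = pm * Qf n E x"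
    unfolding Qf_def by (simp add: sum_distrib_left if_distrib cong: if_cong)
  finally show ?thesis .
qed

end


context rproc begin

lemma gapQ: "Qf n E x \<ge> 4 * real d * (1 - lam) * Fv n x"
proof -
  define S where "S = (\<Sum>u<n. x u)"
  define y where "y v = x v - S / real n" for v
  have n0: "real n > 0" using n2 by simp
  have dd: "\<And>a b c::real. a - c - (b - c) = a - b" by simp
  have "Qf n E y = Qf n E x" unfolding Qf_def y_def dd ..
  moreover have "(\<Sum>u<n. y u) = 0" unfolding y_def S_def using n0 by (simp add: sum_subtractf)
  hence "Qf n E y \<ge> 4 * real d * (1 - lam) * sqf n y" using spectral_gap by blast
  moreover have "sqf n y = Fv n x" unfolding Fv_def y_def S_def ..
  ultimately show ?thesis by simp
qed

lemma rr_pos: "rr > 0"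
  unfolding rr_def using ppos d_pos spectral_gap by simp

lemma exp_Fv_step:
  assumes t: "t \<ge> 1"
  shows "measure_pmf.expectation (\<mu> t) (\<lambda>M. Fv n (cont_step n M x)) \<le> (1 - rr) * Fv n x"
proof -
  have int: "integrable (measure_pmf (\<mu> t)) f" for f :: "nat set set \<Rightarrow> real"
    by (rule integrable_measure_pmf_finite[OF fin_mu[OF t]])
  have "measure_pmf.expectation (\<mu> t) (\<lambda>M. Fv n (cont_step n M x)) =
        measure_pmf.expectation (\<mu> t) (\<lambda>M. Fv n x - Dm M x / 4)"
  proof (rule integral_cong_AE)
    show "AE M in measure_pmf (\<mu> t). Fv n (cont_step n M x) = Fv n x - Dm M x / 4"
      by (rule AE_pmfI) (use hmat[OF t] Fv_step in auto)
  qed auto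
  also have "\<dots> = Fv n x - measure_pmf.expectation (\<mu> t) (\<lambda>M. Dm M x) / 4"
    by (simp add: int)
  also have "\<dots> \<le> Fv n x - pm * Qf n E x / 4" using exp_Dm[OF t, of x] by simp
  also have "\<dots> \<le> Fv n x - pm * (4 * real d * (1 - lam) * Fv n x) / 4"
    using gapQ[of x] ppos by (simp add: mult_left_mono)
  also have "\<dots> = (1 - rr) * Fv n x" unfolding rr_def by (simp add: field_simps)
  finally show ?thesis .
qed

lemma Fv_unit: "w < n \<Longrightarrow> Fv n (\<lambda>u. if u = w then 1 else 0) = 1 - 1 / real n"
proof -
  assume w: "w < n"
  have a: "sqf n (\<lambda>u. if u = w then 1 else 0) = 1"
  proof -
    have "sqf n (\<lambda>u. if u = w then 1 else 0) = (\<Sum>u<n. if u = w then 1 else 0 :: real)"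
      unfolding sqf_def by (intro sum.cong refl) auto
    also have "\<dots> = 1" using w by simp
    finally show ?thesis .
  qed
  have b: "(\<Sum>u<n. if u = w then 1 else 0 :: real) = 1" using w by simp
  show ?thesis using n2 by (simp only: Fv_alt a b) simp
qed

lemma rr_le1: "rr \<le> 1"
proof -
  define x where "x = (\<lambda>u::nat. if u = 0 then 1 else 0 :: real)"
  have Fx: "Fv n x = 1 - 1 / real n" unfolding x_def using Fv_unit[of 0] n2 by simp
  have Fxp: "Fv n x > 0" unfolding Fx using n2 by simp
  have "0 \<le> measure_pmf.expectation (\<mu> 1) (\<lambda>M. Fv n (cont_step n M x))"
    by (rule integral_nonneg_AE) (simp add: Fv_nonneg)
  also have "\<dots> \<le> (1 - rr) * Fv n x" by (rule exp_Fv_step) simp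
  finally have "0 \<le> (1 - rr) * Fv n x" .
  hence "0 \<le> 1 - rr" using Fxp by (simp add: zero_le_mult_iff)
  thus ?thesis by simp
qed

lemma E_Phi_step:
  "measure_pmf.expectation (Pi_pmf {1..Suc t} {} \<mu>) (\<lambda>ms. Phi n ms (Suc t))
    \<le> (1 - rr) * measure_pmf.expectation (Pi_pmf {1..t} {} \<mu>) (\<lambda>ms. Phi n ms t)"
proof -
  have ins: "{1..Suc t} = insert (Suc t) {1..t}" by auto
  have intPi: "integrable (measure_pmf (Pi_pmf {1..t} {} \<mu>)) f" for f :: "(nat \<Rightarrow> nat set set) \<Rightarrow> real"
    by (rule integrable_measure_pmf_finite[OF fin_Pi])
  have intM: "integrable (measure_pmf (\<mu> (Suc t))) f" for f :: "nat set set \<Rightarrow> real"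
    by (rule integrable_measure_pmf_finite[OF fin_mu]) simp
  have "measure_pmf.expectation (Pi_pmf {1..Suc t} {} \<mu>) (\<lambda>ms. Phi n ms (Suc t)) =
    measure_pmf.expectation (Pi_pmf {1..t} {} \<mu>)
      (\<lambda>f. measure_pmf.expectation (\<mu> (Suc t)) (\<lambda>y. Phi n (f(Suc t := y)) (Suc t)))"
    unfolding ins by (rule exp_insert[OF _ _ fin_mu fin_Pi]) auto
  also have "\<dots> \<le> measure_pmf.expectation (Pi_pmf {1..t} {} \<mu>) (\<lambda>f. (1 - rr) * Phi n f t)"
  proof (rule integral_mono[OF intPi intPi])
    fix f :: "nat \<Rightarrow> nat set set"
    have row: "rowv n (f(Suc t := y)) w (Suc t) = cont_step n y (rowv n f w t)" for y w
    proof -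
      have "cont_proc n (f(Suc t := y)) 0 (\<lambda>u. if u = w then 1 else 0) t = cont_proc n f 0 (\<lambda>u. if u = w then 1 else 0) t"
        by (rule cont_proc_cong) auto
      thus ?thesis unfolding rowv_def by simp
    qed
    have "measure_pmf.expectation (\<mu> (Suc t)) (\<lambda>y. Phi n (f(Suc t := y)) (Suc t)) =
        (\<Sum>w<n. measure_pmf.expectation (\<mu> (Suc t)) (\<lambda>y. Fv n (cont_step n y (rowv n f w t))))"
      unfolding Phi_def row by (simp add: integral_sum intM)
    also have "\<dots> \<le> (\<Sum>w<n. (1 - rr) * Fv n (rowv n f w t))"
      by (intro sum_mono exp_Fv_step) simp
    also have "\<dots> = (1 - rr) * Phi n f t" unfolding Phi_def by (simp add: sum_distrib_left)
    finally show "measure_pmf.expectation (\<mu> (Suc t)) (\<lambda>y. Phi n (f(Suc t := y)) (Suc t)) \<le> (1 - rr) * Phi n f t" .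
  qed
  also have "\<dots> = (1 - rr) * measure_pmf.expectation (Pi_pmf {1..t} {} \<mu>) (\<lambda>ms. Phi n ms t)"
    by simp
  finally show ?thesis .
qed

lemma Phi_0: "Phi n ms 0 = real n - 1"
proof -
  have "Phi n ms 0 = (\<Sum>w<n. 1 - 1 / real n)"
    unfolding Phi_def by (intro sum.cong refl) (simp add: rowv_def Fv_unit)
  also have "\<dots> = real n - 1" using n2 by (simp add: field_simps)
  finally show ?thesis .
qed

lemma E_Phi: "measure_pmf.expectation (Pi_pmf {1..t} {} \<mu>) (\<lambda>ms. Phi n ms t) \<le> (1 - rr) ^ t * (real n - 1)"
proof (induct t)
  case 0
  show ?case by (simp add: Phi_0)
next
  case (Suc t)
  have "measure_pmf.expectation (Pi_pmf {1..Suc t} {} \<mu>) (\<lambda>ms. Phi n ms (Suc t))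
    \<le> (1 - rr) * measure_pmf.expectation (Pi_pmf {1..t} {} \<mu>) (\<lambda>ms. Phi n ms t)" by (rule E_Phi_step)
  also have "\<dots> \<le> (1 - rr) * ((1 - rr) ^ t * (real n - 1))"
    using Suc rr_le1 by (intro mult_left_mono) auto
  finally show ?case by simp
qed

end


context rproc begin

lemma main_bound:
  assumes eps: "0 < \<epsilon>" and eK: "\<epsilon> \<le> K"
  shows "\<exists>t. smoothing_prob n \<mu> t K \<epsilon> \<ge> 1 - 1 / real n \<and>
    real t \<le> 8 / (real d * pm) * (1 / (1 - lam)) * ln (K * real n ^ 2 / (\<epsilon> / 2))"
proof -
  have K0: "K > 0" using eps eK by simp
  have nr: "real n \<ge> 2" using n2 by simp
  define Z where "Z = K * real n ^ 2 / (\<epsilon> / 2)"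
  define L where "L = ln Z"
  have n4: "real n ^ 2 \<ge> 4" using nr power_mono[of 2 "real n" 2] by simp
  have "8 * (\<epsilon> / 2) \<le> K * real n ^ 2"
  proof -
    have "8 * (\<epsilon> / 2) = \<epsilon> * 4" by simp
    also have "\<dots> \<le> K * real n ^ 2" using eK n4 eps by (intro mult_mono) auto
    finally show ?thesis .
  qed
  hence Z8: "Z \<ge> 8" unfolding Z_def using eps by (simp add: le_divide_eq)
  have Zpos: "Z > 0" using Z8 by simp
  have L1: "L \<ge> 1" unfolding L_def using Zpos Z8 exp_le by (subst ln_ge_iff) auto
  have lam1: "lam < 1" using spectral_gap by simp
  have rp: "rr > 0" by (rule rr_pos)
  have r1: "rr \<le> 1" by (rule rr_le1)
  define t0 where "t0 = nat \<lceil>2 * L / rr\<rceil>"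
  have t0ge: "real t0 \<ge> 2 * L / rr" unfolding t0_def by (rule real_nat_ceiling_ge)
  have t0le: "real t0 \<le> 2 * L / rr + 1"
  proof -
    have nn: "2 * L / rr \<ge> 0" using L1 rp by simp
    have "real t0 = real_of_int \<lceil>2 * L / rr\<rceil>" unfolding t0_def using nn by simp
    also have "\<dots> \<le> 2 * L / rr + 1" using ceiling_correct[of "2 * L / rr"] by linarith
    finally show ?thesis .
  qed
  have rhs: "8 / (real d * pm) * (1 / (1 - lam)) * L = 8 * L / rr"
    unfolding rr_def using d_pos ppos lam1 by (simp add: field_simps)
  have "6 * L / rr \<ge> 1"
  proof -
    have "6 * L / rr \<ge> 6 * L" using rp r1 L1 by (simp add: le_divide_eq mult_left_le)
    thus ?thesis using L1 by simp
  qed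
  moreover have "8 * L / rr = 2 * L / rr + 6 * L / rr" by (simp add: add_divide_distrib[symmetric])
  ultimately have tb: "real t0 \<le> 8 / (real d * pm) * (1 / (1 - lam)) * L"
    unfolding rhs using t0le by linarith
  define P where "P = Pi_pmf {1..t0} {} \<mu>"
  have intP: "integrable (measure_pmf P) f" for f :: "(nat \<Rightarrow> nat set set) \<Rightarrow> real"
    unfolding P_def by (rule integrable_measure_pmf_finite[OF fin_Pi])
  define \<delta> where "\<delta> = \<epsilon>\<^sup>2 / (4 * K\<^sup>2 * real n)"
  have dp: "\<delta> > 0" unfolding \<delta>_def using eps K0 n2 by simp
  define A where "A = {ms. smoothing n ms 0 t0 K \<epsilon>}"
  define B where "B = {ms. \<delta> \<le> Phi n ms t0}"
  have sub: "(UNIV - A) \<inter> set_pmf P \<subseteq> B"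
  proof
    fix ms assume ms: "ms \<in> (UNIV - A) \<inter> set_pmf P"
    show "ms \<in> B"
    proof (rule ccontr)
      assume "ms \<notin> B"
      hence "Phi n ms t0 \<le> \<epsilon>\<^sup>2 / (4 * K\<^sup>2 * real n)" unfolding B_def \<delta>_def by simp
      moreover have "\<And>i. 1 \<le> i \<Longrightarrow> i \<le> t0 \<Longrightarrow> is_matching n E (ms i)"
        using Pi_match ms unfolding P_def by blast
      ultimately have "smoothing n ms 0 t0 K \<epsilon>" using smooth_of_Phi K0 eps by blast
      thus False using ms unfolding A_def by simp
    qed
  qed
  have "measure_pmf.prob P (UNIV - A) = measure_pmf.prob P ((UNIV - A) \<inter> set_pmf P)"
    by (simp add: measure_Int_set_pmf)
  also have "\<dots> \<le> measure_pmf.prob P B" using sub by (intro measure_pmf.finite_measure_mono) auto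
  also have "\<dots> \<le> measure_pmf.expectation P (\<lambda>ms. Phi n ms t0) / \<delta>"
  proof -
    have "measure_pmf.prob P {x \<in> space (measure_pmf P). \<delta> \<le> Phi n x t0} \<le> measure_pmf.expectation P (\<lambda>ms. Phi n ms t0) / \<delta>"
      by (rule integral_Markov_inequality_measure[OF intP]) (auto simp: Phi_nonneg dp)
    thus ?thesis unfolding B_def by simp
  qed
  also have "\<dots> \<le> (1 - rr) ^ t0 * (real n - 1) / \<delta>"
    using E_Phi[of t0] dp unfolding P_def by (simp add: divide_right_mono)
  also have "\<dots> \<le> 1 / real n"
  proof -
    have "(1 - rr) ^ t0 \<le> exp (- rr) ^ t0"
      using r1 exp_ge_add_one_self[of "- rr"] by (intro power_mono) auto
    also have "\<dots> = exp (- (rr * real t0))" by (simp add: exp_of_nat_mult[symmetric] mult.commute)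
    also have "\<dots> \<le> exp (- (2 * L))"
    proof -
      have "rr * real t0 \<ge> rr * (2 * L / rr)" using t0ge rp by (intro mult_left_mono) auto
      hence "rr * real t0 \<ge> 2 * L" using rp by simp
      thus ?thesis by simp
    qed
    also have "\<dots> = 1 / Z\<^sup>2"
    proof -
      have "exp (2 * L) = exp L ^ 2" using exp_of_nat_mult[of 2 L] by simp
      hence "exp (- (2 * L)) = 1 / (exp L)\<^sup>2" by (simp add: exp_minus inverse_eq_divide)
      also have "exp L = Z" unfolding L_def using Zpos by simp
      finally show ?thesis .
    qed
    finally have ex: "(1 - rr) ^ t0 \<le> 1 / Z\<^sup>2" .
    have "(1 - rr) ^ t0 * (real n - 1) / \<delta> \<le> 1 / Z\<^sup>2 * (real n - 1) / \<delta>"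
      using ex nr dp by (intro divide_right_mono mult_right_mono) auto
    also have "\<dots> = (real n - 1) / real n ^ 3"
    proof -
      define a where "a = 4 * K\<^sup>2"
      define b where "b = \<epsilon>\<^sup>2"
      have a0: "a > 0" unfolding a_def using K0 by simp
      have b0: "b > 0" unfolding b_def using eps by simp
      have n0: "real n > 0" using nr by simp
      have Zs: "Z\<^sup>2 = a * real n ^ 4 / b" unfolding Z_def a_def b_def
        by (simp add: power_divide power_mult_distrib)
      have ds: "\<delta> = b / (a * real n)" unfolding \<delta>_def a_def b_def ..
      show ?thesis unfolding Zs ds using a0 b0 n0 by (simp add: field_simps power3_eq_cube power4_eq_xxxx)
    qed
    also have "\<dots> \<le> 1 / real n"
    proof -
      have "real n * 1 \<le> real n * real n" using nr by (intro mult_left_mono) auto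
      hence "(real n - 1) \<le> real n ^ 2" by (simp add: power2_eq_square)
      hence "(real n - 1) / real n ^ 3 \<le> real n ^ 2 / real n ^ 3" using nr by (intro divide_right_mono) auto
      also have "\<dots> = 1 / real n" using nr by (simp add: power2_eq_square power3_eq_cube)
      finally show ?thesis .
    qed
    finally show ?thesis .
  qed
  finally have "measure_pmf.prob P (UNIV - A) \<le> 1 / real n" .
  moreover have "measure_pmf.prob P (UNIV - A) = 1 - measure_pmf.prob P A"
    using measure_pmf.prob_compl[of A P] by simp
  ultimately have "measure_pmf.prob P A \<ge> 1 - 1 / real n" by simp
  hence "smoothing_prob n \<mu> t0 K \<epsilon> \<ge> 1 - 1 / real n"
    unfolding smoothing_prob_def P_def A_def .
  thus ?thesis using tb unfolding L_def Z_def by blast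
qed

end


theorem theorem2p5:
  fixes n d :: nat and E :: "nat \<Rightarrow> nat \<Rightarrow> bool"
    and \<mu> :: "nat \<Rightarrow> nat set set pmf" and K \<epsilon> :: real
  assumes "simple_graph n E" and "connected_graph n E" and "regular_graph n E d"
    and "\<And>t. t \<ge> 1 \<Longrightarrow> set_pmf (\<mu> t) \<subseteq> {M. is_matching n E M}"
    and "p_min n E \<mu> > 0"
    and "0 < \<epsilon>" and "\<epsilon> \<le> K"
  shows "(\<exists>t. smoothing_prob n \<mu> t K \<epsilon> \<ge> 1 - 1 / real n) \<and>
    real (tau_cont n \<mu> K \<epsilon>) \<le>
      8 / (real d * p_min n E \<mu>) * (1 / (1 - lambda2 (P_mat n E)))
        * ln (K * real n ^ 2 / (\<epsilon> / 2))"
proof -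
  have n0: "n > 0" using assms(2) unfolding connected_graph_def by simp
  show ?thesis
  proof (cases "n = 1")
    case True
    have "{v. v < n \<and> E 0 v} = {}" using True assms(1) unfolding simple_graph_def by auto
    hence "graph_deg n E 0 = 0" unfolding graph_deg_def by simp
    hence d0: "d = 0" using assms(3) n0 unfolding regular_graph_def by simp
    have ex: "smoothing_prob n \<mu> 0 K \<epsilon> \<ge> 1 - 1 / real n"
      using True by (simp add: smoothing_prob_def)
    have "tau_cont n \<mu> K \<epsilon> \<le> 0" unfolding tau_cont_def by (rule Least_le) (rule ex)
    hence "tau_cont n \<mu> K \<epsilon> = 0" by simp
    thus ?thesis using ex d0 by auto
  next
    case False
    with n0 have n2: "n \<ge> 2" by simp
    interpret rproc n E d \<mu>
      by unfold_locales (use assms n2 in auto)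
    obtain t where t: "smoothing_prob n \<mu> t K \<epsilon> \<ge> 1 - 1 / real n"
      "real t \<le> 8 / (real d * pm) * (1 / (1 - lam)) * ln (K * real n ^ 2 / (\<epsilon> / 2))"
      using main_bound[OF assms(6,7)] by blast
    have "tau_cont n \<mu> K \<epsilon> \<le> t" unfolding tau_cont_def by (rule Least_le) (rule t(1))
    hence "real (tau_cont n \<mu> K \<epsilon>) \<le> real t" by simp
    thus ?thesis using t by auto
  qed
qed

end
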